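(* For every integer $k\ge1$, the number of $1$-factorisations of $GP(3k,k)$ equals $t_k(1)+3h_k(2)$.
   Context: $GP(3k,k)$ has vertex set $\{u_i,v_i : i\in\mathbb{Z}_{3k}\}$ and edges $u_iu_{i+1}$, $u_iv_i$, $v_iv_{i+k}$ for $i\in\mathbb{Z}_{3k}$. A $1$-factorisation is a partition of the edge set into perfect matchings (unordered). Let $T$ be a triangle (cycle of length $3$) and $H$ a cycle of length $6$. For $\ell\ge0$, $t_k(\ell)$ denotes the number of walks of length $k$ from $x$ to $y$ in $T$, where $x,y$ are vertices of $T$ at distance $\ell$, and $h_k(\ell)$ denotes the number of walks of length $k$ from $x$ to $y$ in $H$, where $x,y$ are vertices of $H$ at distance $\ell$ (these numbers depend only on $\ell$). *)

theory Defs
  imports Main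
begin

(* Vertices of GP(3k,k): u_i = (False, i), v_i = (True, i), with i \<in> {0..<3k} representing Z_{3k}. *)

definition gp_vertices :: "nat \<Rightarrow> (bool \<times> nat) set" where
  "gp_vertices k = {(b, i). i < 3 * k}"

definition gp_edges :: "nat \<Rightarrow> (bool \<times> nat) set set" where
  "gp_edges k =
     {{(False, i), (False, (i + 1) mod (3 * k))} | i. i < 3 * k}
   \<union> {{(False, i), (True, i)} | i. i < 3 * k}
   \<union> {{(True, i), (True, (i + k) mod (3 * k))} | i. i < 3 * k}"

definition perfect_matching :: "'a set \<Rightarrow> 'a set set \<Rightarrow> 'a set set \<Rightarrow> bool" where
  "perfect_matching V E M \<longleftrightarrow> M \<subseteq> E \<and> (\<forall>x\<in>V. \<exists>!e. e \<in> M \<and> x \<in> e)"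

definition one_factorisation :: "'a set \<Rightarrow> 'a set set \<Rightarrow> 'a set set set \<Rightarrow> bool" where
  "one_factorisation V E F \<longleftrightarrow>
     (\<forall>M\<in>F. perfect_matching V E M \<and> M \<noteq> {}) \<and>
     \<Union>F = E \<and>
     (\<forall>M\<in>F. \<forall>M'\<in>F. M \<noteq> M' \<longrightarrow> M \<inter> M' = {})"

definition cycle_adj :: "nat \<Rightarrow> nat \<Rightarrow> nat \<Rightarrow> bool" where
  "cycle_adj n a b \<longleftrightarrow> a < n \<and> b < n \<and> (b = (a + 1) mod n \<or> a = (b + 1) mod n)"

definition cycle_walks :: "nat \<Rightarrow> nat \<Rightarrow> nat \<Rightarrow> nat \<Rightarrow> nat" where
  "cycle_walks n m x y = card {w :: nat list. length w = m + 1 \<and> w ! 0 = x \<and> w ! m = y \<and>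
       (\<forall>i<m. cycle_adj n (w ! i) (w ! (i + 1)))}"

definition t_walks :: "nat \<Rightarrow> nat \<Rightarrow> nat" where
  "t_walks k l = cycle_walks 3 k 0 l"

definition h_walks :: "nat \<Rightarrow> nat \<Rightarrow> nat" where
  "h_walks k l = cycle_walks 6 k 0 l"

end

theory Submission
  imports Defs "HOL-Library.FuncSet"
begin

definition wset :: "nat \<Rightarrow> nat \<Rightarrow> nat \<Rightarrow> nat \<Rightarrow> nat list set" where
  "wset n m x y = {w :: nat list. length w = m + 1 \<and> w ! 0 = x \<and> w ! m = y \<and>
       (\<forall>i<m. cycle_adj n (w ! i) (w ! (i + 1)))}"

lemma cycle_walks_wset: "cycle_walks n m x y = card (wset n m x y)"
  unfolding cycle_walks_def wset_def by simp

lemma wset_elems: assumes "w \<in> wset n m x y" "x < n" "i \<le> m" shows "w ! i < n"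
  using assms unfolding wset_def cycle_adj_def
  by (cases i) (auto)

lemma wset_finite: assumes "x < n" shows "finite (wset n m x y)"
proof -
  have "wset n m x y \<subseteq> {w. set w \<subseteq> {..<n} \<and> length w = m + 1}"
  proof
    fix w assume w: "w \<in> wset n m x y"
    then have "length w = m + 1" unfolding wset_def by auto
    moreover have "set w \<subseteq> {..<n}"
    proof
      fix a assume "a \<in> set w"
      then obtain i where "i < length w" "w ! i = a" by (auto simp: in_set_conv_nth)
      then show "a \<in> {..<n}" using wset_elems[OF w assms, of i] \<open>length w = m+1\<close> by auto
    qed
    ultimately show "w \<in> {w. set w \<subseteq> {..<n} \<and> length w = m + 1}" by auto
  qed
  moreover have "finite {w. set w \<subseteq> {..<n} \<and> length w = m + 1}"
    by (rule finite_lists_length_eq) auto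
  ultimately show ?thesis by (rule finite_subset)
qed

lemma wset_0: "wset n 0 x y = (if x = y then {[x]} else {})"
  unfolding wset_def
  by (auto simp: length_Suc_conv)

lemma cycle_adj_last:
  assumes "n \<ge> 3" "y < n"
  shows "cycle_adj n a y \<longleftrightarrow> a = (y + 1) mod n \<or> a = (y + n - 1) mod n"
proof -
  have "a < n \<Longrightarrow> y = (a + 1) mod n \<longleftrightarrow> a = (y + n - 1) mod n"
    using assms by (cases "a + 1 = n") (auto simp: mod_if split: if_splits)
  then show ?thesis using assms unfolding cycle_adj_def by (auto)
qed

lemma wset_Suc:
  assumes "n \<ge> 3" "y < n" "x < n"
  shows "wset n (Suc m) x y = (\<lambda>v. v @ [y]) ` (wset n m x ((y+1) mod n) \<union> wset n m x ((y + n - 1) mod n))"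
proof (rule set_eqI, rule iffI)
  fix w assume w: "w \<in> wset n (Suc m) x y"
  then have len: "length w = m + 2" by (simp add: wset_def)
  let ?v = "butlast w"
  have ne: "w \<noteq> []" using len by auto
  have "last w = y" using w len ne by (simp add: last_conv_nth wset_def)
  then have wv: "w = ?v @ [y]" using append_butlast_last_id[OF ne] by simp
  have vn: "\<And>i. i \<le> m \<Longrightarrow> ?v ! i = w ! i" using len by (simp add: nth_butlast)
  have "\<forall>i<Suc m. cycle_adj n (w ! i) (w ! Suc i)" "w ! Suc m = y" using w by (simp_all add: wset_def)
  then have "cycle_adj n (w ! m) y" by auto
  then have "w ! m = (y + 1) mod n \<or> w ! m = (y + n - 1) mod n"
    using cycle_adj_last[OF assms(1,2)] by auto
  moreover have "\<forall>i<m. cycle_adj n (?v ! i) (?v ! (i + 1))" using w vn by (simp add: wset_def)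
  moreover have "length ?v = m + 1" "?v ! 0 = x" using w len vn[of 0] by (auto simp: wset_def)
  ultimately have "?v \<in> wset n m x ((y+1) mod n) \<union> wset n m x ((y + n - 1) mod n)"
    using vn[of m] by (auto simp: wset_def)
  then show "w \<in> (\<lambda>v. v @ [y]) ` (wset n m x ((y+1) mod n) \<union> wset n m x ((y + n - 1) mod n))"
    using wv by blast
next
  fix w assume "w \<in> (\<lambda>v. v @ [y]) ` (wset n m x ((y+1) mod n) \<union> wset n m x ((y + n - 1) mod n))"
  then obtain v z where v: "v \<in> wset n m x z" "z = (y+1) mod n \<or> z = (y + n - 1) mod n" and wv: "w = v @ [y]"
    by blast
  have len: "length v = m + 1" using v by (simp add: wset_def)
  have "cycle_adj n z y" using cycle_adj_last[OF assms(1,2)] v(2) by auto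
  moreover have "\<forall>i<m. cycle_adj n (v ! i) (v ! (i + 1))" "v ! 0 = x" "v ! m = z" using v by (auto simp: wset_def)
  ultimately show "w \<in> wset n (Suc m) x y"
    unfolding wset_def wv using len
    by (auto simp: nth_append less_Suc_eq)
qed

lemma card_wset_Suc:
  assumes "n \<ge> 3" "y < n" "x < n"
  shows "card (wset n (Suc m) x y) = card (wset n m x ((y+1) mod n)) + card (wset n m x ((y + n - 1) mod n))"
proof -
  have d: "(y+1) mod n \<noteq> (y + n - 1) mod n" using assms
    by (cases "y + 1 = n") (auto simp: mod_if)
  have disj: "wset n m x ((y+1) mod n) \<inter> wset n m x ((y + n - 1) mod n) = {}"
  proof (rule ccontr)
    assume "\<not> ?thesis"
    then obtain w where "w \<in> wset n m x ((y+1) mod n)" "w \<in> wset n m x ((y + n - 1) mod n)" by blast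
    then show False using d unfolding wset_def by auto
  qed
  have inj: "inj_on (\<lambda>v. v @ [y]) A" for A by (auto simp: inj_on_def)
  show ?thesis
    unfolding wset_Suc[OF assms] card_image[OF inj]
    by (rule card_Un_disjoint[OF wset_finite wset_finite disj]) (use assms in auto)
qed

lemma tw_12: "card (wset 3 m 0 1) = card (wset 3 m 0 2) \<and> card (wset 3 (Suc m) 0 1) = card (wset 3 m 0 0) + card (wset 3 m 0 2)"
proof (induction m)
  case 0
  then show ?case by (simp add: wset_0 card_wset_Suc)
next
  case (Suc m)
  then show ?case by (simp add: card_wset_Suc)
qed

lemma hw: "y < 6 \<Longrightarrow> card (wset 6 m 0 y) = (if even (m + y) then card (wset 3 m 0 (y mod 3)) else 0)"
proof (induction m arbitrary: y)
  case 0
  from 0 have "y = 0 \<or> y = 1 \<or> y = 2 \<or> y = 3 \<or> y = 4 \<or> y = 5" by auto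
  then show ?case by (auto simp: wset_0)
next
  case (Suc m)
  from Suc.prems have "y = 0 \<or> y = 1 \<or> y = 2 \<or> y = 3 \<or> y = 4 \<or> y = 5" by auto
  then show ?case using Suc.IH tw_12[of m] by (auto simp: card_wset_Suc numeral_2_eq_2[symmetric])
qed

lemma h_walks_eq: "h_walks k 2 = (if even k then t_walks k 1 else 0)"
  unfolding h_walks_def t_walks_def cycle_walks_wset
  using hw[of 2 k] tw_12[of k] by simp

lemma t_walks_2: "card (wset 3 k 0 2) = t_walks k 1"
  unfolding t_walks_def cycle_walks_wset using tw_12[of k] by simp

definition thd :: "nat \<Rightarrow> nat \<Rightarrow> nat" where "thd a b = 3 - a - b"

fun tr3 :: "nat \<times> nat \<times> nat \<Rightarrow> nat \<times> nat \<times> nat \<Rightarrow> bool" where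
  "tr3 (x0,x1,x2) (y0,y1,y2) = (x0<3 \<and> x1<3 \<and> x2<3 \<and> y0<3 \<and> y1<3 \<and> y2<3 \<and> x0\<noteq>y0 \<and> x1\<noteq>y1 \<and> x2\<noteq>y2 \<and>
     thd x0 y0 \<noteq> thd x1 y1 \<and> thd x0 y0 \<noteq> thd x2 y2 \<and> thd x1 y1 \<noteq> thd x2 y2)"

fun sh3 :: "nat \<times> nat \<times> nat \<Rightarrow> nat \<times> nat \<times> nat" where
  "sh3 (x0,x1,x2) = (x1,x2,x0)"

fun nm3 :: "nat \<times> nat \<times> nat \<Rightarrow> nat \<times> nat \<times> nat \<Rightarrow> bool" where
  "nm3 (x0,x1,x2) (y0,y1,y2) = (thd x0 y0 = 0 \<and> thd x1 y1 = 1 \<and> thd x2 y2 = 2)"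

definition tri :: "nat \<Rightarrow> nat \<times> nat \<times> nat" where
  "tri x = (x, (x+1) mod 3, (x+2) mod 3)"

definition bt :: "nat \<Rightarrow> nat \<Rightarrow> nat \<Rightarrow> nat \<times> nat \<times> nat" where
  "bt q a s = (if q=0 then (a+s) mod 3 else a, if q=1 then (a+s) mod 3 else a, if q=2 then (a+s) mod 3 else a)"

definition qof :: "nat \<times> nat \<times> nat \<Rightarrow> nat" where
  "qof X = (case X of (x0,x1,x2) \<Rightarrow> if x1 = x2 then 0 else if x0 = x2 then 1 else 2)"

lemma less3: "(n::nat) < 3 \<longleftrightarrow> n = 0 \<or> n = 1 \<or> n = 2" by auto

lemma step3: "(x::nat) < 3 \<Longrightarrow> y < 3 \<Longrightarrow> y \<noteq> x \<Longrightarrow> y = (x+1) mod 3 \<or> y = (x+2) mod 3"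
  unfolding less3 by auto

lemma tr3_D: assumes "tr3 (x0,x1,x2) Y"
  shows "\<exists>y0 y1 y2. Y = (y0,y1,y2) \<and> (y0 = (x0+1) mod 3 \<or> y0 = (x0+2) mod 3) \<and>
     (y1 = (x1+1) mod 3 \<or> y1 = (x1+2) mod 3) \<and> (y2 = (x2+1) mod 3 \<or> y2 = (x2+2) mod 3)"
proof -
  obtain y0 y1 y2 where Y: "Y = (y0,y1,y2)" by (cases Y) auto
  show ?thesis using assms step3 unfolding Y by auto
qed

lemma LA1: assumes "x < 3" shows "tr3 (tri x) Y \<longleftrightarrow> (\<exists>y<3. y \<noteq> x \<and> Y = tri y)"
proof
  assume a: "tr3 (tri x) Y"
  then have "tr3 (x, (x+1) mod 3, (x+2) mod 3) Y" by (simp add: tri_def)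
  from tr3_D[OF this] obtain y0 y1 y2 where Y: "Y = (y0,y1,y2)" and
    d: "(y0 = (x+1) mod 3 \<or> y0 = (x+2) mod 3)" "(y1 = ((x+1) mod 3+1) mod 3 \<or> y1 = ((x+1) mod 3+2) mod 3)"
      "(y2 = ((x+2) mod 3+1) mod 3 \<or> y2 = ((x+2) mod 3+2) mod 3)" by blast
  show "\<exists>y<3. y \<noteq> x \<and> Y = tri y" using assms a d unfolding Y less3
    by (elim disjE) (auto simp: tri_def thd_def)
next
  assume "\<exists>y<3. y \<noteq> x \<and> Y = tri y"
  then obtain y where "y<3" "y\<noteq>x" "Y = tri y" by auto
  then show "tr3 (tri x) Y" using assms unfolding less3 by (elim disjE) (auto simp: tri_def thd_def)
qed

lemma LB1f: assumes "q < 3" "a < 3" "s = 1 \<or> s = 2" "tr3 (bt q a s) Y"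
  shows "qof Y < 3 \<and> qof Y \<noteq> q \<and> Y = bt (qof Y) ((a + 3 - s) mod 3) (3 - s)"
proof -
  obtain x0 x1 x2 where X: "(x0,x1,x2) = bt q a s" by (cases "bt q a s") auto
  from tr3_D[of x0 x1 x2 Y] assms(4) X[symmetric] obtain y0 y1 y2 where Y: "Y = (y0,y1,y2)" and
    d: "(y0 = (x0+1) mod 3 \<or> y0 = (x0+2) mod 3)" "(y1 = (x1+1) mod 3 \<or> y1 = (x1+2) mod 3)"
      "(y2 = (x2+1) mod 3 \<or> y2 = (x2+2) mod 3)" by auto
  have t: "tr3 (x0,x1,x2) (y0,y1,y2)" using assms(4) X[symmetric] Y by simp
  show ?thesis
    using assms(1-3) t d X unfolding Y less3
    by (elim disjE; simp add: bt_def qof_def thd_def)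
qed

lemma LB1b: assumes "q < 3" "a < 3" "s = 1 \<or> s = 2" "q' < 3" "q' \<noteq> q"
  shows "tr3 (bt q a s) (bt q' ((a + 3 - s) mod 3) (3 - s))"
  using assms unfolding less3 by (elim disjE) (auto simp: bt_def thd_def)

lemma thd_cases:
  assumes "a < 3" "b < 3" "a \<noteq> b"
  shows "thd a b = 0 \<Longrightarrow> (a = 1 \<and> b = 2) \<or> (a = 2 \<and> b = 1)"
    and "thd a b = 1 \<Longrightarrow> (a = 0 \<and> b = 2) \<or> (a = 2 \<and> b = 0)"
    and "thd a b = 2 \<Longrightarrow> (a = 0 \<and> b = 1) \<or> (a = 1 \<and> b = 0)"
  using assms unfolding less3 thd_def by auto

lemma LN: assumes "tr3 X Y" "nm3 X Y"
  shows "(\<exists>x. (x = 1 \<or> x = 2) \<and> X = tri x \<and> Y = tri ((2*x) mod 3)) \<or>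
         (\<exists>q<3. \<exists>s. (s = 1 \<or> s = 2) \<and> X = bt q q s \<and> Y = bt ((q + 3 - s) mod 3) ((q + 3 - s) mod 3) (3 - s))"
proof -
  obtain x0 x1 x2 where X: "X = (x0,x1,x2)" by (cases X) auto
  obtain y0 y1 y2 where Y: "Y = (y0,y1,y2)" by (cases Y) auto
  have t: "x0 < 3" "x1 < 3" "x2 < 3" "y0 < 3" "y1 < 3" "y2 < 3" "x0 \<noteq> y0" "x1 \<noteq> y1" "x2 \<noteq> y2"
    using assms(1) X Y by auto
  have n: "thd x0 y0 = 0" "thd x1 y1 = 1" "thd x2 y2 = 2" using assms(2) X Y by auto
  have c0: "(x0 = 1 \<and> y0 = 2) \<or> (x0 = 2 \<and> y0 = 1)" using thd_cases(1)[OF t(1,4,7) n(1)] .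
  have c1: "(x1 = 0 \<and> y1 = 2) \<or> (x1 = 2 \<and> y1 = 0)" using thd_cases(2)[OF t(2,5,8) n(2)] .
  have c2: "(x2 = 0 \<and> y2 = 1) \<or> (x2 = 1 \<and> y2 = 0)" using thd_cases(3)[OF t(3,6,9) n(3)] .
  show ?thesis using X Y
  proof (cases "x0 = 1"; cases "x1 = 0"; cases "x2 = 0")
    assume "x0 = 1" "x1 = 0" "x2 = 0" then show "?thesis" using c0 c1 c2 X Y by - (rule disjI2, rule exI[of _ 0], simp, rule exI[of _ 1], simp add: bt_def)
  next
    assume "x0 = 1" "x1 = 0" "x2 \<noteq> 0" then show "?thesis" using c0 c1 c2 X Y by - (rule disjI2, rule exI[of _ 1], simp, rule exI[of _ 2], simp add: bt_def)
  next
    assume "x0 = 1" "x1 \<noteq> 0" "x2 = 0" then show "?thesis" using c0 c1 c2 X Y by - (rule disjI1, rule exI[of _ 1], simp add: tri_def)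
  next
    assume "x0 = 1" "x1 \<noteq> 0" "x2 \<noteq> 0" then show "?thesis" using c0 c1 c2 X Y by - (rule disjI2, rule exI[of _ 1], simp, rule exI[of _ 1], simp add: bt_def)
  next
    assume "x0 \<noteq> 1" "x1 = 0" "x2 = 0" then show "?thesis" using c0 c1 c2 X Y by - (rule disjI2, rule exI[of _ 0], simp, rule exI[of _ 2], simp add: bt_def)
  next
    assume "x0 \<noteq> 1" "x1 = 0" "x2 \<noteq> 0" then show "?thesis" using c0 c1 c2 X Y by - (rule disjI1, rule exI[of _ 2], simp add: tri_def)
  next
    assume "x0 \<noteq> 1" "x1 \<noteq> 0" "x2 = 0" then show "?thesis" using c0 c1 c2 X Y by - (rule disjI2, rule exI[of _ 2], simp, rule exI[of _ 1], simp add: bt_def)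
  next
    assume "x0 \<noteq> 1" "x1 \<noteq> 0" "x2 \<noteq> 0" then show "?thesis" using c0 c1 c2 X Y by - (rule disjI2, rule exI[of _ 2], simp, rule exI[of _ 2], simp add: bt_def)
  qed
qed

lemma adj3: "cycle_adj 3 a b \<longleftrightarrow> a < 3 \<and> b < 3 \<and> a \<noteq> b"
  unfolding cycle_adj_def less3 by auto

lemma tr3_lt: "tr3 X Y \<Longrightarrow> fst X < 3 \<and> fst (snd X) < 3 \<and> snd (snd X) < 3"
  by (cases X; cases Y) auto

lemma sh3_tri: "x < 3 \<Longrightarrow> sh3 (tri x) = tri ((x+1) mod 3)"
  unfolding less3 by (auto simp: tri_def)

lemma sh3_bt: "q < 3 \<Longrightarrow> sh3 (bt q a s) = bt ((q+2) mod 3) a s"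
  unfolding less3 by (auto simp: bt_def)

lemma tri_inj: "x < 3 \<Longrightarrow> y < 3 \<Longrightarrow> tri x = tri y \<Longrightarrow> x = y"
  by (simp add: tri_def)

lemma bt_inj: assumes "q < 3" "a < 3" "s = 1 \<or> s = 2" "q' < 3" "a' < 3" "s' = 1 \<or> s' = 2"
   "bt q a s = bt q' a' s'" shows "q = q' \<and> a = a' \<and> s = s'"
  using assms unfolding less3 by (elim disjE) (auto simp: bt_def)

lemma tri_bt: assumes "q < 3" "a < 3" "s = 1 \<or> s = 2" shows "tri x \<noteq> bt q a s"
proof (cases "x < 3")
  case True
  then show ?thesis using assms unfolding less3 by (elim disjE) (auto simp: bt_def tri_def)
next
  case False
  then show ?thesis using assms by (auto simp: bt_def tri_def)
qed

lemma LA2: "a < 3 \<Longrightarrow> b < 3 \<Longrightarrow> a \<noteq> b \<Longrightarrow> tr3 (tri a) (tri b)"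
  using LA1 by blast

lemma qof_bt: assumes "q < 3" "a < 3" "s = 1 \<or> s = 2" shows "qof (bt q a s) = q"
  using assms unfolding less3 by (elim disjE) (auto simp: bt_def qof_def)

definition XW :: "nat \<Rightarrow> (nat \<times> nat \<times> nat) list set" where
  "XW k = {xs. length xs = Suc k \<and> (\<forall>j<k. tr3 (xs!j) (xs!Suc j)) \<and> xs!k = sh3 (xs!0) \<and> nm3 (xs!0) (xs!1)}"

definition XWA :: "nat \<Rightarrow> (nat \<times> nat \<times> nat) list set" where
  "XWA k = {xs \<in> XW k. \<exists>x. xs!0 = tri x}"

definition XWB :: "nat \<Rightarrow> (nat \<times> nat \<times> nat) list set" where
  "XWB k = {xs \<in> XW k. \<not> (\<exists>x. xs!0 = tri x)}"

definition phiA :: "nat list \<Rightarrow> (nat \<times> nat \<times> nat) list" where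
  "phiA w = map (\<lambda>a. tri ((a + w!1) mod 3)) w"

lemma wset3_lt: "w \<in> wset 3 k 0 y \<Longrightarrow> j \<le> k \<Longrightarrow> w ! j < 3"
  using wset_elems[of w 3 k 0 y j] by simp

lemma wset3_adj: "w \<in> wset 3 k 0 y \<Longrightarrow> j < k \<Longrightarrow> w ! j \<noteq> w ! Suc j"
  unfolding wset_def adj3 by auto

lemma wset3_1: assumes "w \<in> wset 3 k 0 y" "k \<ge> 1" shows "w ! 1 = 1 \<or> w ! 1 = 2"
proof -
  have "w!0 = 0" using assms by (simp add: wset_def)
  moreover have "w ! 1 < 3" using wset3_lt[OF assms(1), of 1] assms by simp
  moreover have "w!0 \<noteq> w!1" using wset3_adj[OF assms(1), of 0] assms by simp
  ultimately show ?thesis by auto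
qed

lemma A_bwd: assumes "w \<in> wset 3 k 0 1" "k \<ge> 1" shows "phiA w \<in> XWA k"
proof -
  have len: "length w = Suc k" and w0: "w!0 = 0" and wk: "w!k = 1" using assms by (auto simp: wset_def)
  have c: "w!1 = 1 \<or> w!1 = 2" using wset3_1[OF assms] .
  have lt: "\<And>j. j \<le> k \<Longrightarrow> w!j < 3" using wset3_lt[OF assms(1)] .
  have "\<forall>j<k. tr3 (phiA w!j) (phiA w!Suc j)"
  proof (intro allI impI)
    fix j assume j: "j < k"
    have "w!j < 3" "w!Suc j < 3" "w!j \<noteq> w!Suc j" using lt[of j] lt[of "Suc j"] j wset3_adj[OF assms(1) j] by auto
    then have "tr3 (tri ((w!j + w!1) mod 3)) (tri ((w!Suc j + w!1) mod 3))"
      using c by (intro LA2) (auto simp: less3)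
    then show "tr3 (phiA w!j) (phiA w!Suc j)" using j len by (simp add: phiA_def)
  qed
  moreover have "phiA w!k = sh3 (phiA w!0)" using len w0 wk c by (auto simp: phiA_def tri_def)
  moreover have "nm3 (phiA w!0) (phiA w!1)" using len w0 c assms(2)
    by (auto simp: phiA_def tri_def thd_def)
  ultimately show ?thesis using len by (auto simp: XWA_def XW_def phiA_def)
qed

lemma A_inj: assumes "k \<ge> 1" shows "inj_on phiA (wset 3 k 0 1)"
proof (rule inj_onI)
  fix w w' assume w: "w \<in> wset 3 k 0 1" and w': "w' \<in> wset 3 k 0 1" and eq: "phiA w = phiA w'"
  have len: "length w = Suc k" "length w' = Suc k" and w0: "w!0 = 0" "w'!0 = 0" using w w' by (auto simp: wset_def)
  have "phiA w ! 0 = phiA w' ! 0" using eq by simp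
  then have "tri (w!1 mod 3) = tri (w'!1 mod 3)" using len w0 by (simp add: phiA_def)
  then have c: "w!1 = w'!1" using wset3_1[OF w assms] wset3_1[OF w' assms] by (auto simp: tri_def)
  show "w = w'"
  proof (rule nth_equalityI)
    show "length w = length w'" using len by simp
    fix j assume "j < length w"
    then have j: "j \<le> k" using len by simp
    have "phiA w ! j = phiA w' ! j" using eq by simp
    then have "tri ((w!j + w!1) mod 3) = tri ((w'!j + w!1) mod 3)" using len j c by (simp add: phiA_def)
    then have "(w!j + w!1) mod 3 = (w'!j + w!1) mod 3" by (simp add: tri_def)
    then show "w!j = w'!j" using wset3_lt[OF w j] wset3_lt[OF w' j] wset3_1[OF w assms] unfolding less3
      by (elim disjE) auto
  qed
qed

lemma A_all_tri: assumes "xs \<in> XW k" "xs!0 = tri x"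
  shows "\<forall>j\<le>k. \<exists>y<3. xs!j = tri y"
proof (intro allI impI)
  fix j assume "j \<le> k"
  then show "\<exists>y<3. xs!j = tri y"
  proof (induction j)
    case 0
    have "x < 3"
    proof (cases k)
      case 0
      have "nm3 (xs!0) (xs!1)" "xs!0 = sh3 (xs!0)" using assms 0 by (auto simp: XW_def)
      then show ?thesis using assms(2) by (auto simp: tri_def)
    next
      case (Suc k') then have "tr3 (xs!0) (xs!1)" using assms by (auto simp: XW_def)
      then show ?thesis using tr3_lt[of "xs!0" "xs!1"] assms(2) by (auto simp: tri_def)
    qed
    then show ?case using assms by auto
  next
    case (Suc j)
    then obtain y where y: "y < 3" "xs!j = tri y" by auto
    have "tr3 (xs!j) (xs!Suc j)" using assms Suc.prems by (auto simp: XW_def)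
    then show ?case using LA1[OF y(1)] y by auto
  qed
qed

lemma A_fwd: assumes "xs \<in> XWA k" "k \<ge> 1" shows "xs \<in> phiA ` wset 3 k 0 1"
proof -
  from assms obtain x where xs: "xs \<in> XW k" "xs!0 = tri x" by (auto simp: XWA_def)
  have len: "length xs = Suc k" using xs by (simp add: XW_def)
  have all: "\<forall>j\<le>k. \<exists>y<3. xs!j = tri y" using A_all_tri[OF xs] .
  define v where "v = map fst xs"
  have vlen: "length v = Suc k" using len by (simp add: v_def)
  have xv: "\<And>j. j \<le> k \<Longrightarrow> xs!j = tri (v!j) \<and> v!j < 3"
  proof -
    fix j assume "j \<le> k"
    then obtain y where "y<3" "xs!j = tri y" using all by auto
    then show "xs!j = tri (v!j) \<and> v!j < 3" using \<open>j\<le>k\<close> len by (simp add: v_def tri_def)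
  qed
  have tr: "tr3 (xs!0) (xs!1)" "nm3 (xs!0) (xs!1)" using xs assms(2) by (auto simp: XW_def)
  have "v!0 = 1 \<or> v!0 = 2" "v!1 = (2 * v!0) mod 3"
  proof -
    have "\<not> (\<exists>q<3. \<exists>s. (s = 1 \<or> s = 2) \<and> xs!0 = bt q q s \<and> xs!1 = bt ((q + 3 - s) mod 3) ((q + 3 - s) mod 3) (3 - s))"
      using xs(2) tri_bt by auto
    with LN[OF tr]
    obtain y where "y = 1 \<or> y = 2" "xs!0 = tri y" "xs!1 = tri ((2*y) mod 3)"
      by blast
    then show "v!0 = 1 \<or> v!0 = 2" "v!1 = (2 * v!0) mod 3" using xv[of 0] xv[of 1] assms(2)
      by (auto simp: tri_def)
  qed
  note v01 = this
  have vk: "v!k = (v!0 + 1) mod 3"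
  proof -
    have "xs!k = sh3 (xs!0)" using xs by (simp add: XW_def)
    then show ?thesis using xv[of 0] xv[of k] sh3_tri by (auto simp: tri_def)
  qed
  define w where "w = map (\<lambda>a. (a + 3 - v!0) mod 3) v"
  have wlen: "length w = Suc k" using vlen by (simp add: w_def)
  have wj: "\<And>j. j \<le> k \<Longrightarrow> w!j = (v!j + 3 - v!0) mod 3" using vlen by (simp add: w_def)
  have "w \<in> wset 3 k 0 1"
    unfolding wset_def adj3
  proof (intro CollectI conjI allI impI)
    show "length w = k + 1" using wlen by simp
    show "w!0 = 0" using wj[of 0] v01 by auto
    show "w!k = 1" using wj[of k] vk v01 by auto
    fix i assume i: "i < k"
    have "v!i < 3" "v!(i+1) < 3" using xv[of i] xv[of "i+1"] i by auto
    moreover have "v!i \<noteq> v!(i+1)"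
    proof
      assume "v!i = v!(i+1)"
      moreover have "tr3 (xs!i) (xs!Suc i)" using xs i by (simp add: XW_def)
      ultimately show False using xv[of i] xv[of "i+1"] i by (auto simp: tri_def)
    qed
    ultimately show "w!i < 3" "w!(i+1) < 3" "w!i \<noteq> w!(i+1)"
      using wj[of i] wj[of "i+1"] i v01(1) unfolding less3 by auto
  qed
  moreover have "phiA w = xs"
  proof (rule nth_equalityI)
    show "length (phiA w) = length xs" using wlen len by (simp add: phiA_def)
    fix j assume "j < length (phiA w)"
    then have j: "j \<le> k" using wlen by (simp add: phiA_def)
    have w1: "w!1 = v!0" using wj[of 1] v01 assms(2) by auto
    have "(w!j + w!1) mod 3 = v!j" using wj[OF j] w1 xv[OF j] v01(1) unfolding less3 by auto
    then show "phiA w ! j = xs ! j" using j wlen xv[OF j] by (simp add: phiA_def)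
  qed
  ultimately show ?thesis by blast
qed

lemma card_XWA: assumes "k \<ge> 1" shows "card (XWA k) = t_walks k 1"
proof -
  have "XWA k = phiA ` wset 3 k 0 1" using A_fwd[OF _ assms] A_bwd[OF _ assms] by blast
  then show ?thesis unfolding t_walks_def cycle_walks_wset using card_image[OF A_inj[OF assms]] by simp
qed

definition bseq :: "nat \<Rightarrow> nat list \<Rightarrow> nat \<Rightarrow> nat \<times> nat \<times> nat" where
  "bseq c w j = bt ((w!j + c) mod 3) (if even j then c else (c + w!1) mod 3) (if even j then 3 - w!1 else w!1)"

definition psi :: "nat \<times> nat list \<Rightarrow> (nat \<times> nat \<times> nat) list" where
  "psi p = map (bseq (fst p) (snd p)) [0..<length (snd p)]"

lemma nm3_B: "c < 3 \<Longrightarrow> (v = 1 \<or> v = 2) \<Longrightarrow> nm3 (bt c c (3 - v)) (bt ((v + c) mod 3) ((c + v) mod 3) v)"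
  unfolding less3 by (elim disjE) (auto simp: bt_def thd_def)

lemma B_bwd: assumes "w \<in> wset 3 k 0 2" "k \<ge> 1" "even k" "c < 3" shows "psi (c, w) \<in> XWB k"
proof -
  have len: "length w = Suc k" and w0: "w!0 = 0" and wk: "w!k = 2" using assms by (auto simp: wset_def)
  have v: "w!1 = 1 \<or> w!1 = 2" using wset3_1[OF assms(1,2)] .
  have lt: "\<And>j. j \<le> k \<Longrightarrow> w!j < 3" using wset3_lt[OF assms(1)] .
  have pj: "\<And>j. j \<le> k \<Longrightarrow> psi (c,w) ! j = bseq c w j" using len by (simp add: psi_def del: upt_Suc)
  have "\<forall>j<k. tr3 (psi (c,w)!j) (psi (c,w)!Suc j)"
  proof (intro allI impI)
    fix j assume j: "j < k"
    have q: "(w!j + c) mod 3 < 3" "(w!Suc j + c) mod 3 < 3" by auto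
    have ne: "(w!Suc j + c) mod 3 \<noteq> (w!j + c) mod 3"
      using lt[of j] lt[of "Suc j"] j wset3_adj[OF assms(1) j] assms(4) unfolding less3 by auto
    show "tr3 (psi (c,w)!j) (psi (c,w)!Suc j)"
    proof (cases "even j")
      case True
      have "tr3 (bt ((w!j + c) mod 3) c (3 - w!1)) (bt ((w!Suc j + c) mod 3) ((c + 3 - (3 - w!1)) mod 3) (3 - (3 - w!1)))"
        by (rule LB1b) (use v assms(4) ne in auto)
      moreover have "(c + 3 - (3 - w!1)) mod 3 = (c + w!1) mod 3" "3 - (3 - w!1) = w!1" using v by auto
      ultimately show ?thesis using True j pj[of j] pj[of "Suc j"] by (simp add: bseq_def)
    next
      case False
      have "tr3 (bt ((w!j + c) mod 3) ((c + w!1) mod 3) (w!1)) (bt ((w!Suc j + c) mod 3) (((c + w!1) mod 3 + 3 - w!1) mod 3) (3 - w!1))"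
        by (rule LB1b) (use v assms(4) ne in auto)
      moreover have "((c + w!1) mod 3 + 3 - w!1) mod 3 = c" using v assms(4) unfolding less3 by auto
      ultimately show ?thesis using False j pj[of j] pj[of "Suc j"] by (simp add: bseq_def)
    qed
  qed
  moreover have "psi (c,w)!k = sh3 (psi (c,w)!0)"
    using pj[of k] pj[of 0] assms(3,4) wk w0 sh3_bt[of c] by (simp add: bseq_def add.commute)
  moreover have "nm3 (psi (c,w)!0) (psi (c,w)!1)"
    using pj[of 0] pj[of 1] assms(2,4) w0 nm3_B[OF assms(4) v] by (simp add: bseq_def)
  moreover have "\<not> (\<exists>x. psi (c,w)!0 = tri x)"
  proof
    assume "\<exists>x. psi (c,w)!0 = tri x"
    then obtain x where x: "psi (c,w)!0 = tri x" by blast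
    have "psi (c,w)!0 = bt c c (3 - w!1)" using pj[of 0] w0 assms(4) by (simp add: bseq_def)
    then have "tri x = bt c c (3 - w!1)" using x by simp
    moreover have "3 - w!1 = 1 \<or> 3 - w!1 = 2" using v by auto
    ultimately show False using tri_bt[of c c "3 - w!1" x] assms(4) by blast
  qed
  ultimately show ?thesis using len by (auto simp: XWB_def XW_def psi_def)
qed

lemma B_inj: assumes "k \<ge> 1" shows "inj_on psi ({..<3} \<times> wset 3 k 0 2)"
proof (rule inj_onI)
  fix p p' assume p: "p \<in> {..<3} \<times> wset 3 k 0 2" and p': "p' \<in> {..<3} \<times> wset 3 k 0 2" and eq: "psi p = psi p'"
  obtain c w where pc: "p = (c, w)" by (cases p)
  obtain c' w' where pc': "p' = (c', w')" by (cases p')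
  have w: "w \<in> wset 3 k 0 2" "c < 3" and w': "w' \<in> wset 3 k 0 2" "c' < 3" using p p' pc pc' by auto
  have len: "length w = Suc k" "length w' = Suc k" and w0: "w!0 = 0" "w'!0 = 0" using w w' by (auto simp: wset_def)
  have v: "w!1 = 1 \<or> w!1 = 2" "w'!1 = 1 \<or> w'!1 = 2" using wset3_1[OF w(1) assms] wset3_1[OF w'(1) assms] by auto
  have e: "bseq c w j = bseq c' w' j" if "j \<le> k" for j
  proof -
    have "psi p ! j = psi p' ! j" using eq by simp
    then show ?thesis using that len pc pc' by (simp add: psi_def del: upt_Suc)
  qed
  have "bt c c (3 - w!1) = bt c' c' (3 - w'!1)" using e[of 0] w0 w(2) w'(2) by (simp add: bseq_def)
  then have cc: "c = c'" "3 - w!1 = 3 - w'!1" using bt_inj[of c c "3 - w!1" c' c' "3 - w'!1"] w(2) w'(2) v by auto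
  then have v1: "w!1 = w'!1" using v by auto
  have "w = w'"
  proof (rule nth_equalityI)
    show "length w = length w'" using len by simp
    fix j assume "j < length w"
    then have j: "j \<le> k" using len by simp
    have "(w!j + c) mod 3 = (w'!j + c) mod 3"
      using e[OF j] bt_inj[of "(w!j + c) mod 3" "(if even j then c else (c + w!1) mod 3)" "(if even j then 3 - w!1 else w!1)"
        "(w'!j + c) mod 3" "(if even j then c else (c + w!1) mod 3)" "(if even j then 3 - w!1 else w!1)"]
        cc v1 v w(2) by (auto simp: bseq_def)
    then show "w!j = w'!j" using wset3_lt[OF w(1) j] wset3_lt[OF w'(1) j] w(2) unfolding less3 by auto
  qed
  then show "p = p'" using pc pc' cc by simp
qed

lemma B_fwd: assumes "xs \<in> XWB k" "k \<ge> 1" shows "even k \<and> xs \<in> psi ` ({..<3} \<times> wset 3 k 0 2)"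
proof -
  have xs: "xs \<in> XW k" and nt: "\<not> (\<exists>x. xs!0 = tri x)" using assms by (auto simp: XWB_def)
  have len: "length xs = Suc k" using xs by (simp add: XW_def)
  have tr: "tr3 (xs!0) (xs!1)" "nm3 (xs!0) (xs!1)" using xs assms(2) by (auto simp: XW_def)
  obtain q s where qs: "q < 3" "s = 1 \<or> s = 2" "xs!0 = bt q q s" "xs!1 = bt ((q + 3 - s) mod 3) ((q + 3 - s) mod 3) (3 - s)"
    using LN[OF tr] nt by blast
  define A where "A (j::nat) = (if even j then q else (q + 3 - s) mod 3)" for j
  define S where "S (j::nat) = (if even j then s else 3 - s)" for j
  have AS: "A j < 3" "S j = 1 \<or> S j = 2" for j using qs by (auto simp: A_def S_def)
  have inv: "qof (xs!j) < 3 \<and> xs!j = bt (qof (xs!j)) (A j) (S j)" if "j \<le> k" for j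
    using that
  proof (induction j)
    case 0
    then show ?case using qs qof_bt[of q q s] by (simp add: A_def S_def)
  next
    case (Suc j)
    then have IH: "qof (xs!j) < 3" "xs!j = bt (qof (xs!j)) (A j) (S j)" by auto
    have "tr3 (xs!j) (xs!Suc j)" using xs Suc.prems by (simp add: XW_def)
    then have "tr3 (bt (qof (xs!j)) (A j) (S j)) (xs!Suc j)" using IH by simp
    from LB1f[OF IH(1) AS this]
    have n: "qof (xs!Suc j) < 3" "xs!Suc j = bt (qof (xs!Suc j)) ((A j + 3 - S j) mod 3) (3 - S j)" by auto
    have "(A j + 3 - S j) mod 3 = A (Suc j)" "3 - S j = S (Suc j)"
      using qs unfolding A_def S_def less3 by auto
    then show ?case using n by simp
  qed
  have adjq: "qof (xs!Suc j) \<noteq> qof (xs!j)" if "j < k" for j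
  proof -
    have i: "qof (xs!j) < 3" "xs!j = bt (qof (xs!j)) (A j) (S j)" using inv[of j] that by auto
    have "tr3 (xs!j) (xs!Suc j)" using xs that by (simp add: XW_def)
    then have "tr3 (bt (qof (xs!j)) (A j) (S j)) (xs!Suc j)" using i by simp
    from LB1f[OF i(1) AS this] show ?thesis by auto
  qed
  have ek: "xs!k = bt ((q+2) mod 3) q s" using xs qs sh3_bt[of q q s] by (simp add: XW_def)
  have ik: "qof (xs!k) < 3" "xs!k = bt (qof (xs!k)) (A k) (S k)" using inv[of k] by auto
  have evk: "even k"
  proof (rule ccontr)
    assume "odd k"
    then have "S k = 3 - s" by (simp add: S_def)
    then have "bt ((q+2) mod 3) q s = bt (qof (xs!k)) (A k) (3 - s)" using ek ik by simp
    then have "s = 3 - s" using bt_inj[of "(q+2) mod 3" q s "qof (xs!k)" "A k" "3 - s"] qs ik AS by auto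
    then show False using qs by auto
  qed
  have qk: "qof (xs!k) = (q+2) mod 3"
    using ek ik bt_inj[of "(q+2) mod 3" q s "qof (xs!k)" "A k" "S k"] qs AS by auto
  define w where "w = map (\<lambda>X. (qof X + 3 - q) mod 3) xs"
  have wj: "\<And>j. j \<le> k \<Longrightarrow> w!j = (qof (xs!j) + 3 - q) mod 3" using len by (simp add: w_def)
  have q0: "qof (xs!0) = q" using qs qof_bt[of q q s] by simp
  have q1: "qof (xs!1) = (q + 3 - s) mod 3" using qs qof_bt[of "(q + 3 - s) mod 3" "(q + 3 - s) mod 3" "3 - s"] by auto
  have w1: "w!1 = 3 - s" using wj[of 1] assms(2) q1 qs unfolding less3 by auto
  have wm: "w \<in> wset 3 k 0 2"
    unfolding wset_def adj3
  proof (intro CollectI conjI allI impI)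
    show "length w = k + 1" using len by (simp add: w_def)
    show "w!0 = 0" using wj[of 0] q0 by simp
    show "w!k = 2" using wj[of k] qk qs(1) unfolding less3 by auto
    fix i assume i: "i < k"
    have "qof (xs!i) < 3" "qof (xs!(i+1)) < 3" "qof (xs!(i+1)) \<noteq> qof (xs!i)" using inv[of i] inv[of "i+1"] adjq[OF i] i by auto
    then show "w!i < 3" "w!(i+1) < 3" "w!i \<noteq> w!(i+1)"
      using wj[of i] wj[of "i+1"] i qs(1) unfolding less3 by auto
  qed
  have "psi (q, w) = xs"
  proof (rule nth_equalityI)
    show "length (psi (q, w)) = length xs" using len by (simp add: psi_def w_def)
    fix j assume "j < length (psi (q, w))"
    then have j: "j \<le> k" using len by (simp add: psi_def w_def)
    have z: "(w!j + q) mod 3 = qof (xs!j)" using wj[OF j] inv[OF j] qs(1) unfolding less3 by auto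
    have "psi (q,w) ! j = bseq q w j" using j len by (simp add: psi_def w_def del: upt_Suc)
    also have "\<dots> = bt (qof (xs!j)) (A j) (S j)"
      using z w1 qs(2) by (auto simp: bseq_def A_def S_def)
    also have "\<dots> = xs!j" using inv[OF j] by simp
    finally show "psi (q, w) ! j = xs ! j" .
  qed
  then show ?thesis using evk wm qs(1) by blast
qed

lemma card_XWB: assumes "k \<ge> 1" shows "card (XWB k) = (if even k then 3 * t_walks k 1 else 0)"
proof (cases "even k")
  case True
  have "XWB k = psi ` ({..<3} \<times> wset 3 k 0 2)" using B_fwd[OF _ assms] B_bwd[OF _ assms True] by blast
  then have "card (XWB k) = card ({..<3::nat} \<times> wset 3 k 0 2)" using card_image[OF B_inj[OF assms]] by simp
  also have "\<dots> = 3 * t_walks k 1" using t_walks_2[of k] by (simp add: card_cartesian_product)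
  finally show ?thesis using True by simp
next
  case False
  then have "XWB k = {}" using B_fwd[OF _ assms] by blast
  then show ?thesis using False by simp
qed

lemma finite_XWA: assumes "k \<ge> 1" shows "finite (XWA k)"
proof -
  have "XWA k = phiA ` wset 3 k 0 1" using A_fwd[OF _ assms] A_bwd[OF _ assms] by blast
  then show ?thesis using wset_finite[of 0 3 k 1] by simp
qed

lemma finite_XWB: assumes "k \<ge> 1" shows "finite (XWB k)"
proof (cases "even k")
  case True
  have "XWB k = psi ` ({..<3} \<times> wset 3 k 0 2)" using B_fwd[OF _ assms] B_bwd[OF _ assms True] by blast
  then show ?thesis using wset_finite[of 0 3 k 2] by simp
next
  case False
  then have "XWB k = {}" using B_fwd[OF _ assms] by blast
  then show ?thesis by simp
qed

lemma card_XW: assumes "k \<ge> 1" shows "card (XW k) = t_walks k 1 + 3 * h_walks k 2"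
proof -
  have "XW k = XWA k \<union> XWB k" "XWA k \<inter> XWB k = {}" by (auto simp: XWA_def XWB_def)
  then have "card (XW k) = card (XWA k) + card (XWB k)"
    using card_Un_disjoint[OF finite_XWA[OF assms] finite_XWB[OF assms]] by simp
  then show ?thesis using card_XWA[OF assms] card_XWB[OF assms] h_walks_eq[of k] by simp
qed

definition Col :: "'a set \<Rightarrow> 'a set set \<Rightarrow> 'a set \<Rightarrow> 'a set \<Rightarrow> 'a set \<Rightarrow> ('a set \<Rightarrow> nat) set" where
  "Col V E a0 a1 a2 = {c \<in> E \<rightarrow>\<^sub>E {..<3::nat}. (\<forall>x\<in>V. inj_on c {e\<in>E. x \<in> e}) \<and> c a0 = 0 \<and> c a1 = 1 \<and> c a2 = 2}"

definition cls :: "'a set set \<Rightarrow> ('a set \<Rightarrow> nat) \<Rightarrow> 'a set set set" where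
  "cls E c = (\<lambda>r. {e\<in>E. c e = r}) ` {..<3}"

lemma factor_count:
  fixes V :: "'a set" and E :: "'a set set"
  assumes x0: "x0 \<in> V" and inc0: "{e\<in>E. x0 \<in> e} = {a0,a1,a2}"
    and dist: "a0 \<noteq> a1" "a0 \<noteq> a2" "a1 \<noteq> a2"
    and deg: "\<forall>x\<in>V. card {e\<in>E. x\<in>e} = 3"
  shows "card {F. one_factorisation V E F} = card (Col V E a0 a1 a2)"
proof -
  have aE: "a0 \<in> E" "a1 \<in> E" "a2 \<in> E" "x0 \<in> a0" "x0 \<in> a1" "x0 \<in> a2" using inc0 by auto
  have fwd: "one_factorisation V E (cls E c)" if c: "c \<in> Col V E a0 a1 a2" for c
  proof -
    have cE: "c \<in> E \<rightarrow>\<^sub>E {..<3}" and inj: "\<forall>x\<in>V. inj_on c {e\<in>E. x \<in> e}" and ca: "c a0 = 0" "c a1 = 1" "c a2 = 2"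
      using c by (auto simp: Col_def)
    have pm: "perfect_matching V E {e\<in>E. c e = r}" if r: "r < 3" for r
      unfolding perfect_matching_def
    proof (intro conjI ballI)
      show "{e \<in> E. c e = r} \<subseteq> E" by auto
      fix x assume x: "x \<in> V"
      let ?I = "{e\<in>E. x \<in> e}"
      have cI: "card ?I = 3" using deg x by auto
      have "c ` ?I \<subseteq> {..<3}" using cE by auto
      moreover have "card (c ` ?I) = 3" using card_image[of c ?I] inj x cI by auto
      ultimately have "c ` ?I = {..<3}" by (simp add: card_subset_eq)
      then have "r \<in> c ` ?I" using r by auto
      then obtain e where e: "e \<in> ?I" "c e = r" by auto
      show "\<exists>!e. e \<in> {e \<in> E. c e = r} \<and> x \<in> e"
      proof (rule ex1I[of _ e])
        show "e \<in> {e \<in> E. c e = r} \<and> x \<in> e" using e by auto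
        fix e' assume "e' \<in> {e \<in> E. c e = r} \<and> x \<in> e'"
        then show "e' = e" using e inj x by (auto simp: inj_on_def)
      qed
    qed
    show ?thesis unfolding one_factorisation_def
    proof (intro conjI ballI impI)
      fix M assume "M \<in> cls E c"
      then obtain r where r: "r < 3" "M = {e\<in>E. c e = r}" by (auto simp: cls_def)
      show "perfect_matching V E M" using pm r by auto
      have "r = 0 \<or> r = 1 \<or> r = 2" using r by auto
      then show "M \<noteq> {}" using r aE ca by auto
    next
      show "\<Union> (cls E c) = E" using cE by (auto simp: cls_def)
    next
      fix M M' assume "M \<in> cls E c" "M' \<in> cls E c" "M \<noteq> M'"
      then show "M \<inter> M' = {}" by (auto simp: cls_def)
    qed
  qed
  have inj: "inj_on (cls E) (Col V E a0 a1 a2)"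
  proof (rule inj_onI)
    fix c c' assume c: "c \<in> Col V E a0 a1 a2" and c': "c' \<in> Col V E a0 a1 a2" and eq: "cls E c = cls E c'"
    have ca: "c a0 = 0" "c a1 = 1" "c a2 = 2" "c' a0 = 0" "c' a1 = 1" "c' a2 = 2" using c c' by (auto simp: Col_def)
    have cE: "c \<in> E \<rightarrow>\<^sub>E {..<3}" "c' \<in> E \<rightarrow>\<^sub>E {..<3}" using c c' by (auto simp: Col_def)
    have same: "{e\<in>E. c e = r} = {e\<in>E. c' e = r}" if r: "r < 3" for r
    proof -
      have "{e\<in>E. c e = r} \<in> cls E c'" using eq r by (auto simp: cls_def)
      then obtain r' where r': "{e\<in>E. c e = r} = {e\<in>E. c' e = r'}" by (auto simp: cls_def)
      have "r = 0 \<or> r = 1 \<or> r = 2" using r by auto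
      then obtain a where a: "a \<in> E" "c a = r" "c' a = r" using aE ca by auto
      then have "a \<in> {e\<in>E. c' e = r'}" using r' by blast
      then have "r' = r" using a by simp
      then show ?thesis using r' by simp
    qed
    show "c = c'"
    proof (rule PiE_ext[OF cE])
      fix e assume e: "e \<in> E"
      have "c e < 3" using cE e by auto
      then have s: "{ea\<in>E. c ea = c e} = {ea\<in>E. c' ea = c e}" by (rule same)
      have "e \<in> {ea\<in>E. c ea = c e}" using e by simp
      then have "e \<in> {ea \<in> E. c' ea = c e}" unfolding s .
      then show "c e = c' e" by simp
    qed
  qed
  have surj: "F \<in> cls E ` Col V E a0 a1 a2" if F: "one_factorisation V E F" for F
  proof -
    have pmF: "\<And>M. M \<in> F \<Longrightarrow> perfect_matching V E M" and neF: "\<And>M. M \<in> F \<Longrightarrow> M \<noteq> {}"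
      and unF: "\<Union>F = E" and disF: "\<And>M M'. M \<in> F \<Longrightarrow> M' \<in> F \<Longrightarrow> M \<noteq> M' \<Longrightarrow> M \<inter> M' = {}"
      using F by (auto simp: one_factorisation_def)
    obtain M0 where M0: "M0 \<in> F" "a0 \<in> M0" using unF aE by auto
    obtain M1 where M1: "M1 \<in> F" "a1 \<in> M1" using unF aE by auto
    obtain M2 where M2: "M2 \<in> F" "a2 \<in> M2" using unF aE by auto
    have uq: "e = e'" if "M \<in> F" "e \<in> M" "e' \<in> M" "x \<in> V" "x \<in> e" "x \<in> e'" for M e e' x
    proof -
      have "\<exists>!e. e \<in> M \<and> x \<in> e" using pmF[OF that(1)] that(4) unfolding perfect_matching_def by blast
      then obtain z where "\<forall>y. y \<in> M \<and> x \<in> y \<longrightarrow> y = z" by blast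
      then show ?thesis using that by blast
    qed
    have d01: "M0 \<noteq> M1" using uq[of M0 a0 a1 x0] M0 M1 aE x0 dist by auto
    have d02: "M0 \<noteq> M2" using uq[of M0 a0 a2 x0] M0 M2 aE x0 dist by auto
    have d12: "M1 \<noteq> M2" using uq[of M1 a1 a2 x0] M1 M2 aE x0 dist by auto
    have Fe: "F = {M0, M1, M2}"
    proof
      show "{M0, M1, M2} \<subseteq> F" using M0 M1 M2 by auto
      show "F \<subseteq> {M0, M1, M2}"
      proof
        fix M assume M: "M \<in> F"
        then obtain e where e: "e \<in> M" "x0 \<in> e" using pmF[OF M] x0 unfolding perfect_matching_def by blast
        have "e \<in> E" using pmF[OF M] e unfolding perfect_matching_def by auto
        then have "e = a0 \<or> e = a1 \<or> e = a2" using inc0 e by auto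
        show "M \<in> {M0, M1, M2}"
        proof (rule ccontr)
          assume "M \<notin> {M0, M1, M2}"
          then have "M \<inter> M0 = {}" "M \<inter> M1 = {}" "M \<inter> M2 = {}"
            using disF[OF M M0(1)] disF[OF M M1(1)] disF[OF M M2(1)] by auto
          then show False using \<open>e = a0 \<or> e = a1 \<or> e = a2\<close> e(1) M0(2) M1(2) M2(2) by blast
        qed
      qed
    qed
    have sub: "M0 \<subseteq> E" "M1 \<subseteq> E" "M2 \<subseteq> E" using pmF M0 M1 M2 unfolding perfect_matching_def by auto
    have dj: "M0 \<inter> M1 = {}" "M0 \<inter> M2 = {}" "M1 \<inter> M2 = {}" using disF M0 M1 M2 d01 d02 d12 by auto
    have cov: "E = M0 \<union> M1 \<union> M2" using unF Fe by auto
    define c where "c = (\<lambda>e\<in>E. if e \<in> M0 then 0 else if e \<in> M1 then 1 else (2::nat))"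
    have c0: "e \<in> E \<Longrightarrow> c e = 0 \<longleftrightarrow> e \<in> M0" for e by (simp add: c_def)
    have c1: "e \<in> E \<Longrightarrow> c e = 1 \<longleftrightarrow> e \<in> M1" for e using dj by (auto simp: c_def)
    have c2: "e \<in> E \<Longrightarrow> c e = 2 \<longleftrightarrow> e \<in> M2" for e using dj cov by (auto simp: c_def)
    have cl: "e \<in> E \<Longrightarrow> c e < 3" for e by (simp add: c_def)
    have cls_eq: "cls E c = F"
    proof -
      have "{e\<in>E. c e = 0} = M0" "{e\<in>E. c e = 1} = M1" "{e\<in>E. c e = 2} = M2"
        using sub c0 c1 c2 by auto
      moreover have "{..<3::nat} = {0,1,2}" by auto
      ultimately show ?thesis unfolding cls_def Fe by auto
    qed
    have "c \<in> Col V E a0 a1 a2"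
      unfolding Col_def
    proof (intro CollectI conjI ballI)
      show "c \<in> E \<rightarrow>\<^sub>E {..<3}" by (auto simp: c_def)
      show "c a0 = 0" using aE M0 by (simp add: c_def)
      show "c a1 = 1" using aE M1 c1 by auto
      show "c a2 = 2" using aE M2 c2 by auto
      fix x assume x: "x \<in> V"
      show "inj_on c {e \<in> E. x \<in> e}"
      proof (rule inj_onI)
        fix e e' assume e: "e \<in> {e \<in> E. x \<in> e}" and e': "e' \<in> {e \<in> E. x \<in> e}" and ce: "c e = c e'"
        have ee: "e \<in> E" "e' \<in> E" using e e' by auto
        have "c e = 0 \<or> c e = 1 \<or> c e = 2" using cl[OF ee(1)] by auto
        then have "\<exists>M\<in>F. e \<in> M \<and> e' \<in> M"
          using c0[OF ee(1)] c0[OF ee(2)] c1[OF ee(1)] c1[OF ee(2)] c2[OF ee(1)] c2[OF ee(2)] ce M0 M1 M2 by auto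
        then show "e = e'" using uq e e' x by blast
      qed
    qed
    then show ?thesis using cls_eq by blast
  qed
  have i1: "cls E ` Col V E a0 a1 a2 \<subseteq> {F. one_factorisation V E F}"
  proof
    fix F assume "F \<in> cls E ` Col V E a0 a1 a2"
    then obtain c where "c \<in> Col V E a0 a1 a2" "F = cls E c" by blast
    then show "F \<in> {F. one_factorisation V E F}" using fwd by simp
  qed
  have i2: "{F. one_factorisation V E F} \<subseteq> cls E ` Col V E a0 a1 a2"
  proof
    fix F assume "F \<in> {F. one_factorisation V E F}"
    then show "F \<in> cls E ` Col V E a0 a1 a2" using surj by simp
  qed
  have "bij_betw (cls E) (Col V E a0 a1 a2) {F. one_factorisation V E F}"
    by (rule bij_betw_imageI[OF inj]) (use i1 i2 in blast)
  then show ?thesis using bij_betw_same_card by metis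
qed

definition ou :: "nat \<Rightarrow> nat \<Rightarrow> (bool \<times> nat) set" where
  "ou k m = {(False, m mod (3*k)), (False, (m+1) mod (3*k))}"
definition sp :: "nat \<Rightarrow> nat \<Rightarrow> (bool \<times> nat) set" where
  "sp k m = {(False, m mod (3*k)), (True, m mod (3*k))}"
definition iv :: "nat \<Rightarrow> nat \<Rightarrow> (bool \<times> nat) set" where
  "iv k m = {(True, m mod (3*k)), (True, (m+k) mod (3*k))}"

lemma mod_2n: "(x::nat) < 2*n \<Longrightarrow> x mod n = (if x < n then x else x - n)"
  by (simp add: mod_if le_mod_geq)

lemma succ_mod: "(b::nat) < n \<Longrightarrow> (b+1) mod n = (if b+1 = n then 0 else b+1)"
  by (cases "b+1 = n") auto
lemma two_cycle: assumes "(a::nat) < n" "b < n" "n \<ge> 3" "a = (b+1) mod n" "b = (a+1) mod n" shows False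
proof -
  have A: "a = (if b+1 = n then 0 else b+1)" using assms(2,4) succ_mod by simp
  have B: "b = (if a+1 = n then 0 else a+1)" using assms(1,5) succ_mod by simp
  show False
  proof (cases "b+1 = n")
    case True
    then have "a = 0" using A by simp
    then have "b = 1" using B assms(3) by (simp split: if_splits)
    then show False using True assms(3) by linarith
  next
    case False
    then have a: "a = b+1" using A by simp
    show False
    proof (cases "a+1 = n")
      case True
      then have "b = 0" using B by simp
      then show False using a True assms(3) by linarith
    next
      case False
      then have "b = a+1" using B by simp
      then show False using a by linarith
    qed
  qed
qed
lemma addk_mod: "(b::nat) < n \<Longrightarrow> k \<le> n \<Longrightarrow> (b+k) mod n = (if b+k < n then b+k else b+k-n)"
proof (cases "b+k < n")
  case True then show ?thesis by simp
next
  case False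
  assume "b < n" "k \<le> n"
  then have "b + k - n < n" by linarith
  moreover have "(b+k) mod n = (b+k-n) mod n" using False by (simp add: le_mod_geq)
  ultimately show ?thesis using False by simp
qed
lemma two_k: assumes "(a::nat) < 3*k" "b < 3*k" "k \<ge> 1" "a = (b+k) mod (3*k)" "b = (a+k) mod (3*k)" shows False
proof -
  have A: "a = (if b+k < 3*k then b+k else b+k-3*k)" using assms(2,4) addk_mod[of b "3*k" k] by simp
  have B: "b = (if a+k < 3*k then a+k else a+k-3*k)" using assms(1,5) addk_mod[of a "3*k" k] by simp
  have A': "a + 3*k = b + k \<or> a = b + k"
  proof (cases "b+k < 3*k")
    case True then show ?thesis using A by simp
  next
    case False
    then have "a = b+k-3*k" using A by simp
    then have "a + 3*k = b + k" using False le_add_diff_inverse2[of "3*k" "b+k"] by linarith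
    then show ?thesis by simp
  qed
  have B': "b + 3*k = a + k \<or> b = a + k"
  proof (cases "a+k < 3*k")
    case True then show ?thesis using B by simp
  next
    case False
    then have "b = a+k-3*k" using B by simp
    then have "b + 3*k = a + k" using False le_add_diff_inverse2[of "3*k" "a+k"] by linarith
    then show ?thesis by simp
  qed
  show False using A' B' assms(1-3) by linarith
qed
lemma pred_succ: assumes "(m::nat) < n" shows "((m+1) mod n + n - 1) mod n = m"
proof (cases "m+1 = n")
  case True then show ?thesis using assms by simp
next
  case False
  then have "(m+1) mod n = m+1" using assms by simp
  moreover have "(m + 1 + n - 1) mod n = m" using assms by simp
  ultimately show ?thesis by simp
qed
lemma plus_k: assumes "(m::nat) < 3*k" shows "((m+k) mod (3*k) + 2*k) mod (3*k) = m"
proof -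
  have "((m+k) mod (3*k) + 2*k) mod (3*k) = (m + k + 2*k) mod (3*k)" by (simp add: mod_add_left_eq)
  also have "m + k + 2*k = m + 3*k" by simp
  finally show ?thesis using assms by simp
qed
lemma pred_ne: assumes "(i::nat) < n" "n \<ge> 2" shows "i \<noteq> (i + n - 1) mod n"
proof (cases i)
  case 0 then show ?thesis using assms by simp
next
  case (Suc j)
  then have "(i + n - 1) mod n = (j + n) mod n" by simp
  also have "\<dots> = j" using Suc assms by simp
  finally show ?thesis using Suc by simp
qed
lemma add2k_ne: assumes "(i::nat) < 3*k" "k \<ge> 1" shows "i \<noteq> (i + 2*k) mod (3*k)"
proof -
  have eq: "(i + 2*k) mod (3*k) = (if i + 2*k < 3*k then i + 2*k else i + 2*k - 3*k)"
    using addk_mod[of i "3*k" "2*k"] assms by simp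
  show ?thesis
  proof (cases "i + 2*k < 3*k")
    case True
    then have "(i + 2*k) mod (3*k) = i + 2*k" using eq by simp
    then show ?thesis using assms(2) by simp
  next
    case False
    then have "(i + 2*k) mod (3*k) = i + 2*k - 3*k" using eq by simp
    moreover have "i + 2*k - 3*k = i - k" by simp
    moreover have "i - k < i" using False assms(2) by simp
    ultimately show ?thesis by simp
  qed
qed

context fixes k :: nat assumes k1: "1 \<le> k"
begin

lemma ou_mod: "ou k (i mod (3*k)) = ou k i"
  unfolding ou_def by (simp add: mod_Suc_eq)
lemma sp_mod: "sp k (i mod (3*k)) = sp k i"
  unfolding sp_def by simp
lemma iv_mod: "iv k (i mod (3*k)) = iv k i"
  unfolding iv_def by (simp add: mod_add_left_eq)

lemma ou_eq: assumes "i < 3*k" "j < 3*k" "ou k i = ou k j" shows "i = j"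
proof (rule ccontr)
  assume ne: "i \<noteq> j"
  have "(False, i) \<in> ou k i" using assms(1) by (simp add: ou_def)
  then have "(False, i) \<in> ou k j" using assms(3) by simp
  then have "i = j mod (3*k) \<or> i = (j+1) mod (3*k)" by (simp add: ou_def)
  then have a: "i = (j+1) mod (3*k)" using ne assms(2) by (elim disjE) simp_all
  have "(False, (i+1) mod (3*k)) \<in> ou k i" by (simp add: ou_def)
  then have "(False, (i+1) mod (3*k)) \<in> ou k j" using assms(3) by simp
  then have "(i+1) mod (3*k) = j mod (3*k) \<or> (i+1) mod (3*k) = (j+1) mod (3*k)" by (simp add: ou_def)
  moreover have "(i+1) mod (3*k) \<noteq> i"
  proof (cases "i+1 = 3*k")
    case True
    then have "(i+1) mod (3*k) = 0" by simp
    moreover have "i \<noteq> 0" using True k1 by linarith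
    ultimately show ?thesis by simp
  next
    case False
    then have "(i+1) mod (3*k) = i+1" using assms(1) by simp
    then show ?thesis by simp
  qed
  ultimately have b: "(i+1) mod (3*k) = j" using a[symmetric] assms(2) by (elim disjE) simp_all
  show False using two_cycle[OF assms(1) assms(2) _ a b[symmetric]] k1 by simp
qed

lemma iv_eq: assumes "i < 3*k" "j < 3*k" "iv k i = iv k j" shows "i = j"
proof (rule ccontr)
  assume ne: "i \<noteq> j"
  have "(True, i) \<in> iv k i" using assms(1) by (simp add: iv_def)
  then have "(True, i) \<in> iv k j" using assms(3) by simp
  then have "i = j mod (3*k) \<or> i = (j+k) mod (3*k)" by (simp add: iv_def)
  then have a: "i = (j+k) mod (3*k)" using ne assms(2) by (elim disjE) simp_all
  have "(True, (i+k) mod (3*k)) \<in> iv k i" by (simp add: iv_def)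
  then have "(True, (i+k) mod (3*k)) \<in> iv k j" using assms(3) by simp
  then have "(i+k) mod (3*k) = j mod (3*k) \<or> (i+k) mod (3*k) = (j+k) mod (3*k)" by (simp add: iv_def)
  moreover have "(i+k) mod (3*k) \<noteq> i"
  proof (cases "i+k < 3*k")
    case True
    then have "(i+k) mod (3*k) = i+k" by simp
    then show ?thesis using k1 by simp
  next
    case False
    then have "(i+k) mod (3*k) = i+k-3*k" using addk_mod[of i "3*k" k] assms(1) by simp
    then show ?thesis using k1 False by linarith
  qed
  ultimately have b: "(i+k) mod (3*k) = j" using a[symmetric] assms(2) by (elim disjE) simp_all
  show False using two_k[OF assms(1) assms(2) k1 a b[symmetric]] .
qed

lemma sp_eq: assumes "i < 3*k" "j < 3*k" "sp k i = sp k j" shows "i = j"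
  using assms by (auto simp: sp_def doubleton_eq_iff)

lemma ou_sp: "ou k i \<noteq> sp k j" by (auto simp: ou_def sp_def doubleton_eq_iff)
lemma ou_iv: "ou k i \<noteq> iv k j" by (auto simp: ou_def iv_def doubleton_eq_iff)
lemma sp_iv: "sp k i \<noteq> iv k j" by (auto simp: sp_def iv_def doubleton_eq_iff)

lemma E_eq: "gp_edges k = ou k ` {..<3*k} \<union> sp k ` {..<3*k} \<union> iv k ` {..<3*k}"
  unfolding gp_edges_def ou_def sp_def iv_def by auto

lemma ou_pred: "ou k (i + 3*k - 1) = {(False, (i + 3*k - 1) mod (3*k)), (False, i mod (3*k))}"
proof -
  have "(i + 3*k - 1 + 1) mod (3*k) = i mod (3*k)" using k1 by simp
  then show ?thesis unfolding ou_def by simp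
qed

lemma inc_u: assumes "i < 3*k"
  shows "{e \<in> gp_edges k. (False, i) \<in> e} = {ou k i, ou k (i + 3*k - 1), sp k i}"
proof (rule set_eqI, rule iffI)
  fix e assume "e \<in> {e \<in> gp_edges k. (False, i) \<in> e}"
  then have e: "e \<in> gp_edges k" "(False, i) \<in> e" by auto
  from e(1) consider m where "m < 3*k" "e = ou k m" | m where "m < 3*k" "e = sp k m" | m where "m < 3*k" "e = iv k m"
    unfolding E_eq by blast
  then show "e \<in> {ou k i, ou k (i + 3*k - 1), sp k i}"
  proof cases
    case 1
    then have "i = m \<or> i = (m+1) mod (3*k)" using e(2) by (auto simp: ou_def)
    then show ?thesis
    proof
      assume "i = m" then show ?thesis using 1 by simp
    next
      assume im: "i = (m+1) mod (3*k)"
      have "(i + 3*k - 1) mod (3*k) = m"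
        using im pred_succ[of m "3*k"] 1(1) by simp
      then have "ou k (i + 3*k - 1) = ou k m" using ou_mod[of "i + 3*k - 1"] by simp
      then show ?thesis using 1 by simp
    qed
  next
    case 2 then show ?thesis using e(2) by (auto simp: sp_def)
  next
    case 3 then show ?thesis using e(2) by (auto simp: iv_def)
  qed
next
  fix e assume "e \<in> {ou k i, ou k (i + 3*k - 1), sp k i}"
  moreover have "ou k i \<in> gp_edges k" "sp k i \<in> gp_edges k" using assms unfolding E_eq by auto
  moreover have "ou k (i + 3*k - 1) \<in> gp_edges k"
  proof -
    have "(i + 3*k - 1) mod (3*k) < 3*k" using k1 by simp
    then have "ou k ((i + 3*k - 1) mod (3*k)) \<in> gp_edges k" unfolding E_eq by blast
    then show ?thesis by (simp add: ou_mod)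
  qed
  moreover have "(False, i) \<in> ou k i" "(False, i) \<in> sp k i" "(False, i) \<in> ou k (i + 3*k - 1)"
    using assms unfolding ou_pred by (auto simp: ou_def sp_def)
  ultimately show "e \<in> {e \<in> gp_edges k. (False, i) \<in> e}" by auto
qed

lemma inc_v: assumes "i < 3*k"
  shows "{e \<in> gp_edges k. (True, i) \<in> e} = {sp k i, iv k i, iv k (i + 2*k)}"
proof (rule set_eqI, rule iffI)
  fix e assume "e \<in> {e \<in> gp_edges k. (True, i) \<in> e}"
  then have e: "e \<in> gp_edges k" "(True, i) \<in> e" by auto
  from e(1) consider m where "m < 3*k" "e = ou k m" | m where "m < 3*k" "e = sp k m" | m where "m < 3*k" "e = iv k m"
    unfolding E_eq by blast
  then show "e \<in> {sp k i, iv k i, iv k (i + 2*k)}"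
  proof cases
    case 1 then show ?thesis using e(2) by (auto simp: ou_def)
  next
    case 2 then show ?thesis using e(2) by (auto simp: sp_def)
  next
    case 3
    then have "i = m \<or> i = (m+k) mod (3*k)" using e(2) by (auto simp: iv_def)
    then show ?thesis
    proof
      assume "i = m" then show ?thesis using 3 by simp
    next
      assume im: "i = (m+k) mod (3*k)"
      have "(i + 2*k) mod (3*k) = m"
        using im plus_k[of m k] 3(1) by simp
      then have "iv k (i + 2*k) = iv k m" using iv_mod[of "i + 2*k"] by simp
      then show ?thesis using 3 by simp
    qed
  qed
next
  fix e assume "e \<in> {sp k i, iv k i, iv k (i + 2*k)}"
  moreover have "iv k i \<in> gp_edges k" "sp k i \<in> gp_edges k" using assms unfolding E_eq by auto
  moreover have "iv k (i + 2*k) \<in> gp_edges k"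
  proof -
    have "(i + 2*k) mod (3*k) < 3*k" using k1 by simp
    then have "iv k ((i + 2*k) mod (3*k)) \<in> gp_edges k" unfolding E_eq by blast
    then show ?thesis by (simp add: iv_mod)
  qed
  moreover have "(i + 2*k + k) mod (3*k) = i" using assms by simp
  then have "(True, i) \<in> iv k i" "(True, i) \<in> sp k i" "(True, i) \<in> iv k (i + 2*k)"
    using assms by (auto simp: iv_def sp_def)
  ultimately show "e \<in> {e \<in> gp_edges k. (True, i) \<in> e}" by auto
qed

lemma dist_u: assumes "i < 3*k" shows "ou k i \<noteq> ou k (i + 3*k - 1)"
proof
  assume "ou k i = ou k (i + 3*k - 1)"
  then have "ou k i = ou k ((i + 3*k - 1) mod (3*k))" by (simp add: ou_mod)
  then have "i = (i + 3*k - 1) mod (3*k)" using ou_eq assms k1 by simp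
  then show False using pred_ne[of i "3*k"] assms k1 by simp
qed

lemma dist_v: assumes "i < 3*k" shows "iv k i \<noteq> iv k (i + 2*k)"
proof
  assume "iv k i = iv k (i + 2*k)"
  then have "iv k i = iv k ((i + 2*k) mod (3*k))" by (simp add: iv_mod)
  then have "i = (i + 2*k) mod (3*k)" using iv_eq assms k1 by simp
  then show False using add2k_ne[of i k] assms k1 by simp
qed

lemma deg3: "\<forall>x\<in>gp_vertices k. card {e\<in>gp_edges k. x\<in>e} = 3"
proof
  fix x assume "x \<in> gp_vertices k"
  then obtain b i where x: "x = (b, i)" "i < 3*k" by (auto simp: gp_vertices_def)
  show "card {e\<in>gp_edges k. x\<in>e} = 3"
  proof (cases b)
    case True
    then show ?thesis using x inc_v[OF x(2)] dist_v[OF x(2)] sp_iv by simp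
  next
    case False
    then show ?thesis using x inc_u[OF x(2)] dist_u[OF x(2)] ou_sp by simp
  qed
qed

end

lemma pigeon3: "(a::nat) < 3 \<Longrightarrow> b < 3 \<Longrightarrow> c < 3 \<Longrightarrow> d < 3 \<Longrightarrow> a \<noteq> b \<Longrightarrow> a \<noteq> c \<Longrightarrow> b \<noteq> c \<Longrightarrow> d \<noteq> a \<Longrightarrow> d \<noteq> c \<Longrightarrow> d = b"
  unfolding less3 by (elim disjE) simp_all

lemma thd3: "(a::nat) < 3 \<Longrightarrow> b < 3 \<Longrightarrow> d < 3 \<Longrightarrow> a \<noteq> b \<Longrightarrow> d \<noteq> a \<Longrightarrow> d \<noteq> b \<Longrightarrow> d = thd a b"
  unfolding less3 thd_def by (elim disjE) simp_all

lemma thd_lt: "(a::nat) < 3 \<Longrightarrow> b < 3 \<Longrightarrow> a \<noteq> b \<Longrightarrow> thd a b < 3 \<and> thd a b \<noteq> a \<and> thd a b \<noteq> b"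
  unfolding less3 thd_def by (elim disjE) simp_all

lemma inj3: "f A \<noteq> f B \<Longrightarrow> f A \<noteq> f C \<Longrightarrow> f B \<noteq> f C \<Longrightarrow> inj_on f {A,B,C}"
  unfolding inj_on_def by auto

lemma inj3D: "inj_on f {A,B,C} \<Longrightarrow> A \<noteq> B \<Longrightarrow> A \<noteq> C \<Longrightarrow> B \<noteq> C \<Longrightarrow> f A \<noteq> f B \<and> f A \<noteq> f C \<and> f B \<noteq> f C"
  unfolding inj_on_def by blast

definition cp :: "nat \<Rightarrow> nat \<times> nat \<times> nat \<Rightarrow> nat" where
  "cp r X = (if r = 0 then fst X else if r = 1 then fst (snd X) else snd (snd X))"

lemma cp_sh3: "cp 0 (sh3 X) = cp 1 X" "cp 1 (sh3 X) = cp 2 X" "cp 2 (sh3 X) = cp 0 X"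
  by (cases X; simp add: cp_def)+

lemma cp_sh3_Suc: "cp (Suc 0) (sh3 X) = cp 2 X"
  by (cases X; simp add: cp_def)+

lemma cp_eq: "cp 0 X = cp 0 Y \<Longrightarrow> cp 1 X = cp 1 Y \<Longrightarrow> cp 2 X = cp 2 Y \<Longrightarrow> X = Y"
  by (cases X; cases Y) (simp add: cp_def)

lemma tr3_iff: "tr3 X Y \<longleftrightarrow> (cp 0 X < 3 \<and> cp 1 X < 3 \<and> cp 2 X < 3 \<and> cp 0 Y < 3 \<and> cp 1 Y < 3 \<and> cp 2 Y < 3 \<and>
   cp 0 X \<noteq> cp 0 Y \<and> cp 1 X \<noteq> cp 1 Y \<and> cp 2 X \<noteq> cp 2 Y \<and>
   thd (cp 0 X) (cp 0 Y) \<noteq> thd (cp 1 X) (cp 1 Y) \<and> thd (cp 0 X) (cp 0 Y) \<noteq> thd (cp 2 X) (cp 2 Y) \<and>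
   thd (cp 1 X) (cp 1 Y) \<noteq> thd (cp 2 X) (cp 2 Y))"
  by (cases X; cases Y) (simp add: cp_def)

lemma nm3_iff: "nm3 X Y \<longleftrightarrow> thd (cp 0 X) (cp 0 Y) = 0 \<and> thd (cp 1 X) (cp 1 Y) = 1 \<and> thd (cp 2 X) (cp 2 Y) = 2"
  by (cases X; cases Y) (simp add: cp_def)

lemma tr3_cp: "tr3 X Y \<Longrightarrow> r < 3 \<Longrightarrow> cp r X < 3 \<and> cp r Y < 3 \<and> cp r X \<noteq> cp r Y"
  unfolding tr3_iff less3 by auto

definition Gm :: "nat \<Rightarrow> ((bool \<times> nat) set \<Rightarrow> nat) \<Rightarrow> (nat \<times> nat \<times> nat) list" where
  "Gm k c = map (\<lambda>j. (c (ou k (j + 3*k - 1)), c (ou k (j + k + 3*k - 1)), c (ou k (j + 2*k + 3*k - 1)))) [0..<Suc k]"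

lemma Gm_len: "length (Gm k c) = Suc k" by (simp add: Gm_def)

lemma Gm_nth: assumes "j \<le> k" "r < 3" shows "cp r (Gm k c ! j) = c (ou k (j + r*k + 3*k - 1))"
proof -
  have g: "Gm k c ! j = (c (ou k (j + 3*k - 1)), c (ou k (j + k + 3*k - 1)), c (ou k (j + 2*k + 3*k - 1)))"
    using assms(1) unfolding Gm_def by (simp del: upt_Suc)
  have "r = 0 \<or> r = 1 \<or> r = 2" using assms(2) by auto
  then show ?thesis unfolding g cp_def by auto
qed

context fixes k :: nat assumes k1: "1 \<le> k"
begin

lemma ou_cong: "a mod (3*k) = b mod (3*k) \<Longrightarrow> ou k a = ou k b"
  using ou_mod[OF k1, of a] ou_mod[OF k1, of b] by metis
lemma sp_cong: "a mod (3*k) = b mod (3*k) \<Longrightarrow> sp k a = sp k b"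
  using sp_mod[OF k1, of a] sp_mod[OF k1, of b] by metis
lemma iv_cong: "a mod (3*k) = b mod (3*k) \<Longrightarrow> iv k a = iv k b"
  using iv_mod[OF k1, of a] iv_mod[OF k1, of b] by metis

lemma pred_cong: "((a mod (3*k)) + 3*k - 1) mod (3*k) = (a + 3*k - 1) mod (3*k)"
proof -
  have "(a mod (3*k) + (3*k - 1)) mod (3*k) = (a + (3*k - 1)) mod (3*k)" by (simp add: mod_add_left_eq)
  moreover have "a mod (3*k) + 3*k - 1 = a mod (3*k) + (3*k - 1)" "a + 3*k - 1 = a + (3*k - 1)" using k1 by auto
  ultimately show ?thesis by simp
qed

lemma ouE: "ou k m \<in> gp_edges k"
proof -
  have "m mod (3*k) < 3*k" using k1 by simp
  then have "ou k (m mod (3*k)) \<in> gp_edges k" unfolding E_eq[OF k1] by blast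
  then show ?thesis using ou_mod[OF k1] by simp
qed
lemma spE: "sp k m \<in> gp_edges k"
proof -
  have "m mod (3*k) < 3*k" using k1 by simp
  then have "sp k (m mod (3*k)) \<in> gp_edges k" unfolding E_eq[OF k1] by blast
  then show ?thesis using sp_mod[OF k1] by simp
qed
lemma ivE: "iv k m \<in> gp_edges k"
proof -
  have "m mod (3*k) < 3*k" using k1 by simp
  then have "iv k (m mod (3*k)) \<in> gp_edges k" unfolding E_eq[OF k1] by blast
  then show ?thesis using iv_mod[OF k1] by simp
qed

abbreviation "ColK \<equiv> Col (gp_vertices k) (gp_edges k) (sp k 0) (iv k (2*k)) (iv k 0)"

lemma col_lt: "c \<in> ColK \<Longrightarrow> X \<in> gp_edges k \<Longrightarrow> c X < 3"
  unfolding Col_def by auto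

lemma cu: assumes "c \<in> ColK"
  shows "c (ou k i) \<noteq> c (ou k (i + 3*k - 1)) \<and> c (ou k i) \<noteq> c (sp k i) \<and> c (ou k (i + 3*k - 1)) \<noteq> c (sp k i)"
proof -
  let ?i = "i mod (3*k)"
  have i: "?i < 3*k" using k1 by simp
  have "(False, ?i) \<in> gp_vertices k" using i by (simp add: gp_vertices_def)
  then have "inj_on c {e\<in>gp_edges k. (False, ?i) \<in> e}" using assms by (simp add: Col_def)
  then have "inj_on c {ou k ?i, ou k (?i + 3*k - 1), sp k ?i}" using inc_u[OF k1 i] by simp
  moreover have "ou k ?i = ou k i" "sp k ?i = sp k i" using ou_mod[OF k1] sp_mod[OF k1] by auto
  moreover have "ou k (?i + 3*k - 1) = ou k (i + 3*k - 1)"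
    using ou_cong[of "?i + 3*k - 1" "i + 3*k - 1"] pred_cong[of i] by simp
  moreover have "ou k ?i \<noteq> ou k (?i + 3*k - 1)" using dist_u[OF k1 i] .
  ultimately show ?thesis using inj3D[of c "ou k i" "ou k (i + 3*k - 1)" "sp k i"] ou_sp[OF k1] by metis
qed

lemma cv: assumes "c \<in> ColK"
  shows "c (sp k i) \<noteq> c (iv k i) \<and> c (sp k i) \<noteq> c (iv k (i + 2*k)) \<and> c (iv k i) \<noteq> c (iv k (i + 2*k))"
proof -
  let ?i = "i mod (3*k)"
  have i: "?i < 3*k" using k1 by simp
  have "(True, ?i) \<in> gp_vertices k" using i by (simp add: gp_vertices_def)
  then have "inj_on c {e\<in>gp_edges k. (True, ?i) \<in> e}" using assms by (simp add: Col_def)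
  then have "inj_on c {sp k ?i, iv k ?i, iv k (?i + 2*k)}" using inc_v[OF k1 i] by simp
  moreover have "iv k ?i = iv k i" "sp k ?i = sp k i" using iv_mod[OF k1] sp_mod[OF k1] by auto
  moreover have "iv k (?i + 2*k) = iv k (i + 2*k)"
    using iv_cong[of "?i + 2*k" "i + 2*k"] by (simp add: mod_add_left_eq)
  moreover have "iv k ?i \<noteq> iv k (?i + 2*k)" using dist_v[OF k1 i] .
  ultimately show ?thesis using inj3D[of c "sp k i" "iv k i" "iv k (i + 2*k)"] sp_iv[OF k1] by metis
qed

lemma iv3k1: "iv k (i + 3*k) = iv k i"
  by (rule iv_cong) simp
lemma iv3k2: "iv k (i + 4*k) = iv k (i + k)"
proof -
  have e: "i + 4*k = (i + k) + 3*k" by simp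
  show ?thesis unfolding e by (rule iv3k1)
qed

lemma tri_iv: assumes "c \<in> ColK"
  shows "c (iv k i) \<noteq> c (iv k (i+k)) \<and> c (iv k i) \<noteq> c (iv k (i+2*k)) \<and> c (iv k (i+k)) \<noteq> c (iv k (i+2*k))"
proof -
  have a: "c (iv k i) \<noteq> c (iv k (i + 2*k))" using cv[OF assms, of i] by simp
  have b: "c (iv k (i+k)) \<noteq> c (iv k (i + k + 2*k))" using cv[OF assms, of "i+k"] by simp
  have c: "c (iv k (i+2*k)) \<noteq> c (iv k (i + 2*k + 2*k))" using cv[OF assms, of "i+2*k"] by simp
  have e1: "i + k + 2*k = i + 3*k" and e2: "i + 2*k + 2*k = i + 4*k" by auto
  have b': "c (iv k (i+k)) \<noteq> c (iv k i)" using b unfolding e1 iv3k1 .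
  have c': "c (iv k (i+2*k)) \<noteq> c (iv k (i+k))" using c unfolding e2 iv3k2 .
  show ?thesis using a b' c' by metis
qed

lemma spk: assumes "c \<in> ColK" shows "c (sp k i) = c (iv k (i+k))"
proof -
  have l: "c (iv k i) < 3" "c (iv k (i+k)) < 3" "c (iv k (i+2*k)) < 3" "c (sp k i) < 3"
    using col_lt[OF assms] ivE spE by auto
  show ?thesis using pigeon3[OF l(1-4)] tri_iv[OF assms, of i] cv[OF assms, of i] by blast
qed

lemma spthd: assumes "c \<in> ColK" shows "c (sp k i) = thd (c (ou k (i + 3*k - 1))) (c (ou k i))"
proof -
  have l: "c (ou k (i + 3*k - 1)) < 3" "c (ou k i) < 3" "c (sp k i) < 3"
    using col_lt[OF assms] ouE spE by auto
  show ?thesis using thd3[OF l] cu[OF assms, of i] by metis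
qed

lemma Gm_succ: assumes "j < k" "r < 3" shows "cp r (Gm k c ! Suc j) = c (ou k (j + r*k))"
proof -
  have "cp r (Gm k c ! Suc j) = c (ou k (Suc j + r*k + 3*k - 1))" using Gm_nth assms by simp
  moreover have "Suc j + r*k + 3*k - 1 = (j + r*k) + 3*k" by simp
  moreover have "ou k ((j + r*k) + 3*k) = ou k (j + r*k)" by (rule ou_cong) simp
  ultimately show ?thesis by simp
qed

lemma fwd_tr: assumes c: "c \<in> ColK" and j: "j < k" shows "tr3 (Gm k c ! j) (Gm k c ! Suc j)"
proof -
  have P: "cp r (Gm k c ! j) = c (ou k ((j + r*k) + 3*k - 1))" if "r < 3" for r
    using Gm_nth[of j k r c] j that by simp
  have Q: "cp r (Gm k c ! Suc j) = c (ou k (j + r*k))" if "r < 3" for r using Gm_succ j that by simp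
  have U: "c (ou k (i + 3*k - 1)) < 3 \<and> c (ou k i) < 3 \<and> c (ou k (i + 3*k - 1)) \<noteq> c (ou k i) \<and>
      thd (c (ou k (i + 3*k - 1))) (c (ou k i)) = c (sp k i)" for i
    using cu[OF c, of i] col_lt[OF c] ouE spthd[OF c, of i] by auto
  have S: "c (sp k j) \<noteq> c (sp k (j + k)) \<and> c (sp k j) \<noteq> c (sp k (j + 2*k)) \<and> c (sp k (j+k)) \<noteq> c (sp k (j + 2*k))"
  proof -
    have e1: "j + k + k = j + 2*k" and e2: "j + 2*k + k = j + 3*k" by auto
    have s1: "c (sp k j) = c (iv k (j+k))" using spk[OF c, of j] .
    have s2: "c (sp k (j+k)) = c (iv k (j+2*k))" using spk[OF c, of "j+k"] unfolding e1 .
    have s3: "c (sp k (j+2*k)) = c (iv k j)" using spk[OF c, of "j+2*k"] unfolding e2 iv3k1 .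
    show ?thesis unfolding s1 s2 s3 using tri_iv[OF c, of j] by auto
  qed
  show ?thesis unfolding tr3_iff
    using P[of 0] P[of 1] P[of 2] Q[of 0] Q[of 1] Q[of 2] U[of j] U[of "j+k"] U[of "j + 2*k"] S
    by simp
qed


lemma fwd_sh: assumes c: "c \<in> ColK" shows "Gm k c ! k = sh3 (Gm k c ! 0)"
proof (rule cp_eq)
  have a1: "k + 0*k + 3*k - 1 = 0 + 1*k + 3*k - 1" by simp
  have a2: "k + 1*k + 3*k - 1 = 0 + 2*k + 3*k - 1" by simp
  have a3: "k + 2*k + 3*k - 1 = (0 + 0*k + 3*k - 1) + 3*k" using k1 by simp
  have o3: "ou k ((0 + 0*k + 3*k - 1) + 3*k) = ou k (0 + 0*k + 3*k - 1)" by (rule ou_cong) simp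
  have g0: "cp 0 (Gm k c ! k) = c (ou k (k + 0*k + 3*k - 1))" by (rule Gm_nth) auto
  have g1: "cp 1 (Gm k c ! k) = c (ou k (k + 1*k + 3*k - 1))" by (rule Gm_nth) auto
  have g2: "cp 2 (Gm k c ! k) = c (ou k (k + 2*k + 3*k - 1))" by (rule Gm_nth) auto
  have h0: "cp 0 (Gm k c ! 0) = c (ou k (0 + 0*k + 3*k - 1))" by (rule Gm_nth) auto
  have h1: "cp 1 (Gm k c ! 0) = c (ou k (0 + 1*k + 3*k - 1))" by (rule Gm_nth) auto
  have h2: "cp 2 (Gm k c ! 0) = c (ou k (0 + 2*k + 3*k - 1))" by (rule Gm_nth) auto
  show "cp 0 (Gm k c ! k) = cp 0 (sh3 (Gm k c ! 0))" unfolding cp_sh3 g0 h1 a1 ..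
  show "cp 1 (Gm k c ! k) = cp 1 (sh3 (Gm k c ! 0))" unfolding cp_sh3 g1 h2 a2 ..
  show "cp 2 (Gm k c ! k) = cp 2 (sh3 (Gm k c ! 0))" unfolding cp_sh3 g2 h0 a3 o3 ..
qed

lemma fwd_nm: assumes c: "c \<in> ColK" shows "nm3 (Gm k c ! 0) (Gm k c ! 1)"
proof -
  have U: "thd (c (ou k (i + 3*k - 1))) (c (ou k i)) = c (sp k i)" for i using spthd[OF c, of i] by simp
  have n0: "c (sp k 0) = 0" "c (iv k (2*k)) = 1" "c (iv k 0) = 2" using c by (auto simp: Col_def)
  have "c (sp k k) = 1" using spk[OF c, of k] n0 by (simp add: mult_2)
  moreover have "c (sp k (2*k)) = 2" using spk[OF c, of "2*k"] iv3k1[of 0] n0 by simp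
  ultimately show ?thesis unfolding nm3_iff
    using Gm_nth[of 0 k 0 c] Gm_nth[of 0 k 1 c] Gm_nth[of 0 k 2 c] Gm_succ[of 0 0 c] Gm_succ[of 0 1 c] Gm_succ[of 0 2 c]
      U[of 0] U[of k] U[of "2*k"] n0 k1 by simp
qed


lemma fwd: assumes c: "c \<in> ColK" shows "Gm k c \<in> XW k"
  unfolding XW_def using Gm_len fwd_tr[OF c] fwd_sh[OF c] fwd_nm[OF c] by auto


lemma Gm_ou: assumes "m < 3*k" shows "cp (m div k) (Gm k c ! (m mod k + 1)) = c (ou k m)"
proof -
  have kp: "k > 0" using k1 by simp
  have j: "m mod k + 1 \<le> k" using kp by (simp add: Suc_leI)
  have r: "m div k < 3" using assms kp by (simp add: div_less_iff_less_mult mult.commute)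
  have "cp (m div k) (Gm k c ! (m mod k + 1)) = c (ou k (m mod k + 1 + m div k * k + 3*k - 1))"
    by (rule Gm_nth[OF j r])
  moreover have "m mod k + 1 + m div k * k + 3*k - 1 = m + 3*k"
    using div_mult_mod_eq[of m k] by simp
  moreover have "ou k (m + 3*k) = ou k m" by (rule ou_cong) simp
  ultimately show ?thesis by simp
qed

lemma col_ext: assumes c: "c \<in> ColK" and c': "c' \<in> ColK" and eq: "\<forall>m<3*k. c (ou k m) = c' (ou k m)"
  shows "c = c'"
proof -
  have ou: "c (ou k m) = c' (ou k m)" for m
  proof -
    have "m mod (3*k) < 3*k" using k1 by simp
    then show ?thesis using eq ou_mod[OF k1, of m] by metis
  qed
  have sp: "c (sp k m) = c' (sp k m)" for m using spthd[OF c, of m] spthd[OF c', of m] ou by simp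
  have iv: "c (iv k m) = c' (iv k m)" for m
  proof -
    have e: "m + 2*k + k = m + 3*k" by simp
    have "c (sp k (m + 2*k)) = c (iv k m)" using spk[OF c, of "m + 2*k"] unfolding e iv3k1 .
    moreover have "c' (sp k (m + 2*k)) = c' (iv k m)" using spk[OF c', of "m + 2*k"] unfolding e iv3k1 .
    ultimately show ?thesis using sp by simp
  qed
  have cE: "c \<in> gp_edges k \<rightarrow>\<^sub>E {..<3}" "c' \<in> gp_edges k \<rightarrow>\<^sub>E {..<3}" using c c' by (auto simp: Col_def)
  show ?thesis
  proof (rule PiE_ext[OF cE])
    fix X assume "X \<in> gp_edges k"
    then show "c X = c' X" unfolding E_eq[OF k1] using ou sp iv by blast
  qed
qed

lemma inj_Gm: "inj_on (Gm k) ColK"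
proof (rule inj_onI)
  fix c c' assume c: "c \<in> ColK" and c': "c' \<in> ColK" and eq: "Gm k c = Gm k c'"
  show "c = c'"
  proof (rule col_ext[OF c c'], intro allI impI)
    fix m assume "m < 3*k"
    then show "c (ou k m) = c' (ou k m)" using Gm_ou[of m c] Gm_ou[of m c'] eq by simp
  qed
qed

end

definition ec :: "nat \<Rightarrow> (nat \<times> nat \<times> nat) list \<Rightarrow> nat \<Rightarrow> nat" where
  "ec k xs m = cp (m div k) (xs ! (m mod k + 1))"
definition spc :: "nat \<Rightarrow> (nat \<times> nat \<times> nat) list \<Rightarrow> nat \<Rightarrow> nat" where
  "spc k xs i = thd (ec k xs ((i + 3*k - 1) mod (3*k))) (ec k xs (i mod (3*k)))"
definition colf :: "nat \<Rightarrow> (nat \<times> nat \<times> nat) list \<Rightarrow> (bool \<times> nat) set \<Rightarrow> nat" where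
  "colf k xs X = (if \<exists>m<3*k. X = ou k m then ec k xs (THE m. m < 3*k \<and> X = ou k m)
     else if \<exists>m<3*k. X = sp k m then spc k xs (THE m. m < 3*k \<and> X = sp k m)
     else spc k xs ((THE m. m < 3*k \<and> X = iv k m) + 2*k))"
definition cf :: "nat \<Rightarrow> (nat \<times> nat \<times> nat) list \<Rightarrow> (bool \<times> nat) set \<Rightarrow> nat" where
  "cf k xs = restrict (colf k xs) (gp_edges k)"

context fixes k :: nat and xs :: "(nat \<times> nat \<times> nat) list" assumes k1: "1 \<le> k" and xs: "xs \<in> XW k"
begin

lemma colf_ou: "m < 3*k \<Longrightarrow> colf k xs (ou k m) = ec k xs m"
proof -
  assume m: "m < 3*k"
  have "(THE m'. m' < 3*k \<and> ou k m = ou k m') = m"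
    by (rule the_equality) (use m ou_eq[OF k1] in auto)
  then show ?thesis using m unfolding colf_def by auto
qed

lemma colf_sp: "m < 3*k \<Longrightarrow> colf k xs (sp k m) = spc k xs m"
proof -
  assume m: "m < 3*k"
  have "(THE m'. m' < 3*k \<and> sp k m = sp k m') = m"
    by (rule the_equality) (use m sp_eq[OF k1] in auto)
  moreover have "\<not> (\<exists>m'<3*k. sp k m = ou k m')" using ou_sp[OF k1] by metis
  ultimately show ?thesis using m unfolding colf_def by auto
qed

lemma colf_iv: "m < 3*k \<Longrightarrow> colf k xs (iv k m) = spc k xs (m + 2*k)"
proof -
  assume m: "m < 3*k"
  have "(THE m'. m' < 3*k \<and> iv k m = iv k m') = m"
    by (rule the_equality) (use m iv_eq[OF k1] in auto)
  moreover have "\<not> (\<exists>m'<3*k. iv k m = ou k m')" using ou_iv[OF k1] by metis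
  moreover have "\<not> (\<exists>m'<3*k. iv k m = sp k m')" using sp_iv[OF k1] by metis
  ultimately show ?thesis using m unfolding colf_def by auto
qed

lemma cf_ou: "cf k xs (ou k m) = ec k xs (m mod (3*k))"
proof -
  have "m mod (3*k) < 3*k" using k1 by simp
  then have "colf k xs (ou k (m mod (3*k))) = ec k xs (m mod (3*k))" by (rule colf_ou)
  then show ?thesis using ou_mod[OF k1, of m] ouE[OF k1, of m] by (simp add: cf_def)
qed

lemma spc_cong: "a mod (3*k) = b mod (3*k) \<Longrightarrow> spc k xs a = spc k xs b"
  unfolding spc_def using pred_cong[OF k1, of a] pred_cong[OF k1, of b] by metis

lemma cf_sp: "cf k xs (sp k m) = spc k xs m"
proof -
  have "m mod (3*k) < 3*k" using k1 by simp
  then have "colf k xs (sp k (m mod (3*k))) = spc k xs (m mod (3*k))" by (rule colf_sp)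
  moreover have "spc k xs (m mod (3*k)) = spc k xs m" by (rule spc_cong) simp
  ultimately show ?thesis using sp_mod[OF k1, of m] spE[OF k1, of m] by (simp add: cf_def)
qed

lemma cf_iv: "cf k xs (iv k m) = spc k xs (m + 2*k)"
proof -
  have "m mod (3*k) < 3*k" using k1 by simp
  then have "colf k xs (iv k (m mod (3*k))) = spc k xs (m mod (3*k) + 2*k)" by (rule colf_iv)
  moreover have "spc k xs (m mod (3*k) + 2*k) = spc k xs (m + 2*k)" by (rule spc_cong) (simp add: mod_add_left_eq)
  ultimately show ?thesis using iv_mod[OF k1, of m] ivE[OF k1, of m] by (simp add: cf_def)
qed

lemma xs_len: "length xs = Suc k" using xs by (simp add: XW_def)
lemma xs_tr: "j < k \<Longrightarrow> tr3 (xs!j) (xs!Suc j)" using xs by (simp add: XW_def)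
lemma xs_sh: "xs!k = sh3 (xs!0)" using xs by (simp add: XW_def)
lemma xs_nm: "nm3 (xs!0) (xs!1)" using xs by (simp add: XW_def)

lemma S1: assumes "j < k" "r < 3" shows "ec k xs (j + r*k) = cp r (xs ! Suc j)"
proof -
  have kp: "k > 0" using k1 by simp
  have "(j + r*k) div k = r" "(j + r*k) mod k = j" using assms kp by auto
  then show ?thesis by (simp add: ec_def)
qed

lemma S2: assumes "j \<le> k" "r < 3" shows "ec k xs ((j + r*k + 3*k - 1) mod (3*k)) = cp r (xs ! j)"
proof (cases j)
  case (Suc j')
  then have j': "j' < k" using assms by simp
  have "j + r*k + 3*k - 1 = (j' + r*k) + 3*k" using Suc by simp
  moreover have "j' + r*k < 3*k" using j' assms(2) by (auto simp: less3)
  ultimately have "(j + r*k + 3*k - 1) mod (3*k) = j' + r*k" by simp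
  then show ?thesis using S1[OF j' assms(2)] Suc by simp
next
  case 0
  have km: "k - 1 < k" using k1 by simp
  have "r = 0 \<or> r = 1 \<or> r = 2" using assms(2) by auto
  then show ?thesis
  proof (elim disjE)
    assume r: "r = 0"
    have "(j + r*k + 3*k - 1) mod (3*k) = (k - 1) + 2*k" using 0 r k1 by simp
    then show ?thesis using S1[OF km, of 2] xs_sh 0 r k1 by (simp add: cp_sh3)
  next
    assume r: "r = 1"
    have "j + r*k + 3*k - 1 = (k - 1) + 3*k" using 0 r k1 by simp
    moreover have "((k - 1) + 3*k) mod (3*k) = k - 1"
    proof -
      have "((k - 1) + 3*k) mod (3*k) = (k - 1) mod (3*k)" by (rule mod_add_self2)
      also have "\<dots> = k - 1" using k1 by simp
      finally show ?thesis .
    qed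
    ultimately have "(j + r*k + 3*k - 1) mod (3*k) = (k - 1) + 0*k" by simp
    then show ?thesis using S1[OF km, of 0] xs_sh 0 r k1 by (simp add: cp_sh3)
  next
    assume r: "r = 2"
    have "j + r*k + 3*k - 1 = ((k - 1) + 1*k) + 3*k" using 0 r k1 by simp
    moreover have "(((k - 1) + 1*k) + 3*k) mod (3*k) = (k - 1) + 1*k"
    proof -
      have "(((k - 1) + 1*k) + 3*k) mod (3*k) = ((k - 1) + 1*k) mod (3*k)" by (rule mod_add_self2)
      also have "\<dots> = (k - 1) + 1*k" using k1 by simp
      finally show ?thesis .
    qed
    ultimately have "(j + r*k + 3*k - 1) mod (3*k) = (k - 1) + 1*k" by simp
    then show ?thesis using S1[OF km, of 1] xs_sh 0 r k1 by (simp add: cp_sh3 cp_sh3_Suc)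
  qed
qed


lemma EI: assumes "i < 3*k" shows "ec k xs i = cp (i div k) (xs ! Suc (i mod k))"
  by (simp add: ec_def)

lemma idx: assumes "i < 3*k" shows "i mod k + (i div k) * k = i" "i mod k < k" "i div k < 3"
proof -
  have kp: "k > 0" using k1 by simp
  show "i mod k + (i div k) * k = i" by (simp add: mod_div_mult_eq)
  show "i mod k < k" using kp by simp
  show "i div k < 3" using assms kp by (simp add: div_less_iff_less_mult mult.commute)
qed

lemma EP: assumes "i < 3*k" shows "ec k xs ((i + 3*k - 1) mod (3*k)) = cp (i div k) (xs ! (i mod k))"
proof -
  have "ec k xs ((i mod k + (i div k) * k + 3*k - 1) mod (3*k)) = cp (i div k) (xs ! (i mod k))"
    by (rule S2) (use idx[OF assms] in auto)
  then show ?thesis using idx(1)[OF assms] by simp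
qed

lemma EU: assumes "i < 3*k"
  shows "ec k xs ((i + 3*k - 1) mod (3*k)) < 3 \<and> ec k xs i < 3 \<and> ec k xs ((i + 3*k - 1) mod (3*k)) \<noteq> ec k xs i"
  using tr3_cp[OF xs_tr[OF idx(2)[OF assms]] idx(3)[OF assms]] EP[OF assms] EI[OF assms] by simp

lemma spc_jr: assumes "j < k" "r < 3" shows "spc k xs (j + r*k) = thd (cp r (xs!j)) (cp r (xs!Suc j))"
proof -
  have lt: "j + r*k < 3*k" using assms by (auto simp: less3)
  have "ec k xs ((j + r*k + 3*k - 1) mod (3*k)) = cp r (xs!j)" by (rule S2) (use assms in auto)
  moreover have "ec k xs ((j + r*k) mod (3*k)) = cp r (xs!Suc j)" using S1[OF assms] lt by simp
  ultimately show ?thesis by (simp add: spc_def)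
qed

lemma spc_lt: "spc k xs i < 3"
proof -
  let ?i = "i mod (3*k)"
  have i: "?i < 3*k" using k1 by simp
  have "spc k xs i = spc k xs ?i" by (rule spc_cong) simp
  also have "\<dots> = thd (ec k xs ((?i + 3*k - 1) mod (3*k))) (ec k xs ?i)" using i by (simp add: spc_def)
  finally show ?thesis using EU[OF i] thd_lt by simp
qed

lemma W: "spc k xs i \<noteq> spc k xs (i+k) \<and> spc k xs i \<noteq> spc k xs (i+2*k) \<and> spc k xs (i+k) \<noteq> spc k xs (i+2*k)"
proof -
  let ?i = "i mod (3*k)"
  have i: "?i < 3*k" using k1 by simp
  define j where "j = ?i mod k"
  define r where "r = ?i div k"
  have jr: "j + r*k = ?i" "j < k" "r < 3" using idx[OF i] by (auto simp: j_def r_def)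
  have c0: "spc k xs i = spc k xs (j + r*k)" by (rule spc_cong) (simp add: jr(1))
  have c1: "spc k xs (i+k) = spc k xs (j + r*k + k)" by (rule spc_cong) (simp add: jr(1) mod_add_left_eq)
  have c2: "spc k xs (i+2*k) = spc k xs (j + r*k + 2*k)" by (rule spc_cong) (simp add: jr(1) mod_add_left_eq)
  have sv: "spc k xs (j + r'*k) = thd (cp r' (xs!j)) (cp r' (xs!Suc j))" if "r' < 3" for r'
    using spc_jr[OF jr(2) that] .
  have d: "thd (cp 0 (xs!j)) (cp 0 (xs!Suc j)) \<noteq> thd (cp 1 (xs!j)) (cp 1 (xs!Suc j)) \<and>
           thd (cp 0 (xs!j)) (cp 0 (xs!Suc j)) \<noteq> thd (cp 2 (xs!j)) (cp 2 (xs!Suc j)) \<and>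
           thd (cp 1 (xs!j)) (cp 1 (xs!Suc j)) \<noteq> thd (cp 2 (xs!j)) (cp 2 (xs!Suc j))"
    using xs_tr[OF jr(2)] unfolding tr3_iff by simp
  have per1: "spc k xs (j + 3*k) = spc k xs j" by (rule spc_cong) simp
  have e4: "j + 4*k = (j + k) + 3*k" by simp
  have "(j + 4*k) mod (3*k) = (j + k) mod (3*k)" unfolding e4 by (rule mod_add_self2)
  then have per2: "spc k xs (j + 4*k) = spc k xs (j + k)" by (rule spc_cong)
  note per = per1 per2
  have s0: "spc k xs j = thd (cp 0 (xs!j)) (cp 0 (xs!Suc j))" using sv[of 0] by simp
  have s1: "spc k xs (j + k) = thd (cp 1 (xs!j)) (cp 1 (xs!Suc j))" using sv[of 1] by simp
  have s2: "spc k xs (j + 2*k) = thd (cp 2 (xs!j)) (cp 2 (xs!Suc j))" using sv[of 2] by simp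
  have "r = 0 \<or> r = 1 \<or> r = 2" using jr(3) by auto
  then show ?thesis
  proof (elim disjE)
    assume r: "r = 0"
    have a: "j + r*k = j" "j + r*k + k = j + k" "j + r*k + 2*k = j + 2*k" using r by auto
    show ?thesis unfolding c0[unfolded a(1)] c1[unfolded a(2)] c2[unfolded a(3)] s0 s1 s2 using d by auto
  next
    assume r: "r = 1"
    have a: "j + r*k = j + k" "j + r*k + k = j + 2*k" "j + r*k + 2*k = j + 3*k" using r by auto
    show ?thesis unfolding c0[unfolded a(1)] c1[unfolded a(2)] c2[unfolded a(3)] per1 s0 s1 s2 using d by auto
  next
    assume r: "r = 2"
    have a: "j + r*k = j + 2*k" "j + r*k + k = j + 3*k" "j + r*k + 2*k = j + 4*k" using r by auto
    show ?thesis unfolding c0[unfolded a(1)] c1[unfolded a(2)] c2[unfolded a(3)] per1 per2 s0 s1 s2 using d by auto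
  qed
qed

lemma cf_vals: assumes "X \<in> gp_edges k" shows "cf k xs X < 3"
proof -
  from assms consider m where "m < 3*k" "X = ou k m" | m where "m < 3*k" "X = sp k m" | m where "m < 3*k" "X = iv k m"
    unfolding E_eq[OF k1] by blast
  then show ?thesis
  proof cases
    case 1 then show ?thesis using cf_ou EU by simp
  next
    case 2 then show ?thesis using cf_sp spc_lt by simp
  next
    case 3 then show ?thesis using cf_iv spc_lt by simp
  qed
qed

lemma cf_Col: "cf k xs \<in> ColK k"
  unfolding Col_def
proof (intro CollectI conjI ballI)
  show "cf k xs \<in> gp_edges k \<rightarrow>\<^sub>E {..<3}"
    using cf_vals by (auto simp: cf_def)
next
  fix x assume "x \<in> gp_vertices k"
  then obtain b i where x: "x = (b, i)" "i < 3*k" by (auto simp: gp_vertices_def)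
  show "inj_on (cf k xs) {e \<in> gp_edges k. x \<in> e}"
  proof (cases b)
    case False
    have e1: "cf k xs (ou k i) = ec k xs i" using cf_ou x(2) by simp
    have e2: "cf k xs (ou k (i + 3*k - 1)) = ec k xs ((i + 3*k - 1) mod (3*k))" using cf_ou by simp
    have e3: "cf k xs (sp k i) = thd (ec k xs ((i + 3*k - 1) mod (3*k))) (ec k xs i)"
      using cf_sp x(2) by (simp add: spc_def)
    have "inj_on (cf k xs) {ou k i, ou k (i + 3*k - 1), sp k i}"
      by (rule inj3) (use e1 e2 e3 EU[OF x(2)] thd_lt[of "ec k xs ((i + 3*k - 1) mod (3*k))" "ec k xs i"] in auto)
    then show ?thesis using inc_u[OF k1 x(2)] x(1) False by simp
  next
    case True
    have e1: "cf k xs (sp k i) = spc k xs i" using cf_sp by simp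
    have e2: "cf k xs (iv k i) = spc k xs (i + 2*k)" using cf_iv by simp
    have "spc k xs (i + 2*k + 2*k) = spc k xs (i + k)"
    proof (rule spc_cong)
      have e4: "i + 2*k + 2*k = (i + k) + 3*k" by simp
      show "(i + 2*k + 2*k) mod (3*k) = (i + k) mod (3*k)" unfolding e4 by (rule mod_add_self2)
    qed
    then have e3: "cf k xs (iv k (i + 2*k)) = spc k xs (i + k)" using cf_iv[of "i + 2*k"] by simp
    have "inj_on (cf k xs) {sp k i, iv k i, iv k (i + 2*k)}"
      by (rule inj3) (use e1 e2 e3 W[of i] in auto)
    then show ?thesis using inc_v[OF k1 x(2)] x(1) True by simp
  qed
next
  have n: "thd (cp 0 (xs!0)) (cp 0 (xs!1)) = 0" "thd (cp 1 (xs!0)) (cp 1 (xs!1)) = 1" "thd (cp 2 (xs!0)) (cp 2 (xs!1)) = 2"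
    using xs_nm unfolding nm3_iff by auto
  have k0: "0 < k" using k1 by simp
  show "cf k xs (sp k 0) = 0" using cf_sp[of 0] spc_jr[OF k0, of 0] n by simp
  have "spc k xs (2*k + 2*k) = spc k xs (0 + 1*k)"
  proof (rule spc_cong)
    have e4: "2*k + 2*k = (0 + 1*k) + 3*k" by simp
    show "(2*k + 2*k) mod (3*k) = (0 + 1*k) mod (3*k)" unfolding e4 by (rule mod_add_self2)
  qed
  then show "cf k xs (iv k (2*k)) = 1" using cf_iv[of "2*k"] spc_jr[OF k0, of 1] n by simp
  show "cf k xs (iv k 0) = 2" using cf_iv[of 0] spc_jr[OF k0, of 2] n by simp
qed

lemma Gm_cf: "Gm k (cf k xs) = xs"
proof (rule nth_equalityI)
  show "length (Gm k (cf k xs)) = length xs" using Gm_len xs_len by simp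
  fix j assume "j < length (Gm k (cf k xs))"
  then have j: "j \<le> k" using Gm_len by (simp add: less_Suc_eq_le)
  have "cp r (Gm k (cf k xs) ! j) = cp r (xs ! j)" if r: "r < 3" for r
  proof -
    have "cp r (Gm k (cf k xs) ! j) = cf k xs (ou k (j + r*k + 3*k - 1))" using Gm_nth[OF j r] .
    also have "\<dots> = ec k xs ((j + r*k + 3*k - 1) mod (3*k))" using cf_ou by simp
    also have "\<dots> = cp r (xs ! j)" using S2[OF j r] .
    finally show ?thesis .
  qed
  then show "Gm k (cf k xs) ! j = xs ! j" using cp_eq by simp
qed

end

lemma bij_Gm: assumes k1: "1 \<le> k" shows "bij_betw (Gm k) (ColK k) (XW k)"
proof (rule bij_betw_imageI)
  show "inj_on (Gm k) (ColK k)" using inj_Gm[OF k1] .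
  show "Gm k ` ColK k = XW k"
  proof
    show "Gm k ` ColK k \<subseteq> XW k" using fwd[OF k1] by blast
    show "XW k \<subseteq> Gm k ` ColK k"
    proof
      fix xs assume xs: "xs \<in> XW k"
      have "Gm k (cf k xs) = xs" using Gm_cf[OF k1 xs] .
      moreover have "cf k xs \<in> ColK k" using cf_Col[OF k1 xs] .
      ultimately show "xs \<in> Gm k ` ColK k" by (intro image_eqI[of xs "Gm k" "cf k xs"]) simp_all
    qed
  qed
qed

theorem lemma4:
  fixes k :: nat
  assumes "k \<ge> 1"
  shows "card {F. one_factorisation (gp_vertices k) (gp_edges k) F} = t_walks k 1 + 3 * h_walks k 2"
proof -
  have x0: "(True, 0) \<in> gp_vertices k" using assms by (simp add: gp_vertices_def)
  have inc0: "{e \<in> gp_edges k. (True, 0) \<in> e} = {sp k 0, iv k (2*k), iv k 0}"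
    using inc_v[OF assms, of 0] assms by auto
  have d1: "sp k 0 \<noteq> iv k (2*k)" "sp k 0 \<noteq> iv k 0" using sp_iv[OF assms] by auto
  have d2: "iv k (2*k) \<noteq> iv k 0" using dist_v[OF assms, of 0] assms by auto
  have "card {F. one_factorisation (gp_vertices k) (gp_edges k) F} = card (ColK k)"
    by (rule factor_count[OF x0 inc0 d1 d2 deg3[OF assms]])
  also have "\<dots> = card (XW k)" using bij_betw_same_card[OF bij_Gm[OF assms]] .
  also have "\<dots> = t_walks k 1 + 3 * h_walks k 2" using card_XW[OF assms] .
  finally show ?thesis .
qed

end
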